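(* Let $p$ be a prime and $F$ an arbitrary field. Let $F'|F$ be a cyclic extension of degree dividing $p-1$ and let $L|F'$ be a cyclic extension of degree $p$. If $L|F$ is galoisian, then there exists a (solvable) degree-$p$ extension $E|F$ such that $L=EF'$; any two such extensions $E$ are conjugate over $F$; and every $F$-conjugate of $E$ is contained in $L$.
   Context: A degree-$p$ extension $E$ of a field $F$ is called solvable if it is separable and the Galois group of its Galois closure over $F$ is solvable. All extensions are taken inside a fixed separable algebraic closure of $F$. *)

theory Defs
  imports "HOL-Algebra.Solvable_Groups" "HOL-Computational_Algebra.Polynomial"
begin

text \<open>Ambient field: the type 'a (playing the role of the fixed separable
algebraic closure Omega of F).  Subfields of Omega are sets of elements.\<close>

definition is_subfield :: "'a::field set \<Rightarrow> bool" where
  "is_subfield K \<longleftrightarrow> 0 \<in> K \<and> 1 \<in> K \<and>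
     (\<forall>x\<in>K. \<forall>y\<in>K. x + y \<in> K \<and> x * y \<in> K) \<and>
     (\<forall>x\<in>K. - x \<in> K) \<and> (\<forall>x\<in>K. x \<noteq> 0 \<longrightarrow> inverse x \<in> K)"

definition is_basis_over :: "'a::field set \<Rightarrow> 'a set \<Rightarrow> 'a list \<Rightarrow> bool" where
  "is_basis_over K L bs \<longleftrightarrow> set bs \<subseteq> L \<and>
     (\<forall>c. (\<forall>i. c i \<in> K) \<longrightarrow> (\<Sum>i<length bs. c i * bs ! i) = 0 \<longrightarrow> (\<forall>i<length bs. c i = 0)) \<and>
     L = {(\<Sum>i<length bs. c i * bs ! i) | c. \<forall>i. c i \<in> K}"

definition ext_degree :: "'a::field set \<Rightarrow> 'a set \<Rightarrow> nat \<Rightarrow> bool" where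
  "ext_degree K L n \<longleftrightarrow> is_subfield K \<and> is_subfield L \<and> K \<subseteq> L \<and>
     (\<exists>bs. is_basis_over K L bs \<and> length bs = n)"

definition Aut :: "'a::field set \<Rightarrow> 'a set \<Rightarrow> ('a \<Rightarrow> 'a) set" where
  "Aut K L = {\<sigma>. bij_betw \<sigma> L L \<and>
     (\<forall>x\<in>L. \<forall>y\<in>L. \<sigma> (x + y) = \<sigma> x + \<sigma> y \<and> \<sigma> (x * y) = \<sigma> x * \<sigma> y) \<and>
     (\<forall>x\<in>K. \<sigma> x = x) \<and> (\<forall>x. x \<notin> L \<longrightarrow> \<sigma> x = x)}"

definition Gal :: "'a::field set \<Rightarrow> 'a set \<Rightarrow> ('a \<Rightarrow> 'a) monoid" where
  "Gal K L = \<lparr>carrier = Aut K L, monoid.mult = (\<circ>), one = id\<rparr>"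

definition galois_ext :: "'a::field set \<Rightarrow> 'a set \<Rightarrow> bool" where
  "galois_ext K L \<longleftrightarrow> (\<exists>n. ext_degree K L n \<and> card (Aut K L) = n)"

definition cyclic_ext :: "'a::field set \<Rightarrow> 'a set \<Rightarrow> bool" where
  "cyclic_ext K L \<longleftrightarrow> galois_ext K L \<and>
     (\<exists>\<sigma>\<in>Aut K L. \<forall>\<tau>\<in>Aut K L. \<exists>n. \<tau> = \<sigma> ^^ n)"

definition separable_over :: "'a::field set \<Rightarrow> 'a \<Rightarrow> bool" where
  "separable_over K x \<longleftrightarrow> (\<exists>f. f \<noteq> 0 \<and> (\<forall>i. coeff f i \<in> K) \<and> poly f x = 0 \<and>
     coprime f (pderiv f))"

definition separable_ext :: "'a::field set \<Rightarrow> 'a set \<Rightarrow> bool" where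
  "separable_ext K E \<longleftrightarrow> (\<forall>x\<in>E. separable_over K x)"

definition sep_alg_closure_of :: "'a::field set \<Rightarrow> bool" where
  "sep_alg_closure_of K \<longleftrightarrow> is_subfield K \<and> (\<forall>x. separable_over K x) \<and>
     (\<forall>f :: 'a poly. degree f \<ge> 1 \<and> coprime f (pderiv f) \<longrightarrow> (\<exists>x. poly f x = 0))"

definition compositum :: "'a::field set \<Rightarrow> 'a set \<Rightarrow> 'a set" where
  "compositum E F' = \<Inter>{K. is_subfield K \<and> E \<union> F' \<subseteq> K}"

definition galois_closure :: "'a::field set \<Rightarrow> 'a set \<Rightarrow> 'a set" where
  "galois_closure K E = \<Inter>{M. is_subfield M \<and> E \<subseteq> M \<and> galois_ext K M}"

definition solvable_ext :: "'a::field set \<Rightarrow> 'a set \<Rightarrow> bool" where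
  "solvable_ext K E \<longleftrightarrow> separable_ext K E \<and> galois_ext K (galois_closure K E) \<and>
     solvable (Gal K (galois_closure K E))"

definition conjugate_over :: "'a::field set \<Rightarrow> 'a set \<Rightarrow> 'a set \<Rightarrow> bool" where
  "conjugate_over K E E' \<longleftrightarrow> (\<exists>\<sigma>.
     (\<forall>x\<in>E. \<forall>y\<in>E. \<sigma> (x + y) = \<sigma> x + \<sigma> y \<and> \<sigma> (x * y) = \<sigma> x * \<sigma> y) \<and>
     \<sigma> 1 = 1 \<and> (\<forall>x\<in>K. \<sigma> x = x) \<and> \<sigma> ` E = E')"

end

theory Submission
  imports Defs "HOL-Algebra.Embedded_Algebras" "HOL-Algebra.Multiplicative_Group"
begin

definition RR :: "'a::field ring" where
  "RR = \<lparr>carrier = UNIV, monoid.mult = (*), one = 1, zero = 0, add = (+)\<rparr>"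

lemma RR_simps [simp]: "carrier RR = UNIV" "monoid.mult RR = (*)" "one RR = 1"
  "zero RR = 0" "add RR = (+)"
  by (simp_all add: RR_def)

lemma RR_cring: "cring (RR::'a::field ring)"
proof (rule cringI)
  show "abelian_group (RR::'a ring)"
    by (rule abelian_groupI) (auto intro: left_minus)
  show "Group.comm_monoid (RR::'a ring)"
    by (rule monoid.monoid_comm_monoidI) (auto intro!: Group.monoid.intro simp: mult.commute mult.assoc)
qed (auto simp: distrib_right)

lemma RR_field: "field (RR::'a::field ring)"
proof -
  interpret cring "RR::'a ring" by (rule RR_cring)
  show ?thesis
    by (rule cring_fieldI2) (simp_all, metis right_inverse)
qed

interpretation R: field "RR::'a::field ring"
  by (rule RR_field)

lemma RR_a_inv [simp]: "a_inv RR x = - (x::'a::field)"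
  by (rule R.minus_equality) auto

lemma RR_m_inv [simp]: "(x::'a::field) \<noteq> 0 \<Longrightarrow> m_inv RR x = inverse x"
  by (rule R.inv_char) auto

lemma subfield_RR: "is_subfield K \<Longrightarrow> subfield K (RR::'a::field ring)"
  unfolding is_subfield_def
  apply (rule R.subfieldI')
   apply (rule R.subringI)
  by auto

lemma combine_sum:
  "length Ks = length Us \<Longrightarrow> R.combine Ks Us = (\<Sum>i<length Us. Ks!i * Us!i)"
proof (induction Us arbitrary: Ks)
  case Nil
  then show ?case by simp
next
  case (Cons u Us)
  then obtain k Ks' where Ks: "Ks = k # Ks'" "length Ks' = length Us"
    by (cases Ks) auto
  have "(\<Sum>i<length (u#Us). Ks!i * (u#Us)!i) = k * u + (\<Sum>i<length Us. Ks'!i * Us!i)"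
    unfolding Ks(1) length_Cons sum.lessThan_Suc_shift by simp
  then show ?case using Cons.IH[OF Ks(2)] Ks by simp
qed

lemma combine_map:
  "R.combine (map c [0..<length Us]) Us = (\<Sum>i<length Us. c i * Us!i)"
  by (subst combine_sum) auto

lemma basis_iff:
  assumes K: "is_subfield K"
  shows "is_basis_over K L bs \<longleftrightarrow> set bs \<subseteq> L \<and> R.independent K bs \<and> R.Span K bs = L"
proof -
  have KS: "subfield K RR" by (rule subfield_RR[OF K])
  have span: "R.Span K bs = {(\<Sum>i<length bs. c i * bs ! i) | c. \<forall>i. c i \<in> K}"
  proof -
    have "R.Span K bs = {R.combine Ks bs | Ks. length Ks = length bs \<and> set Ks \<subseteq> K}"
      by (rule R.Span_eq_combine_set_length_version) (use subfield_RR[OF K] in auto)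
    also have "\<dots> = {(\<Sum>i<length bs. c i * bs ! i) | c. \<forall>i. c i \<in> K}"
    proof (intro equalityI subsetI)
      fix x assume "x \<in> {R.combine Ks bs | Ks. length Ks = length bs \<and> set Ks \<subseteq> K}"
      then obtain Ks where Ks: "length Ks = length bs" "set Ks \<subseteq> K" "x = R.combine Ks bs" by blast
      define c where "c i = (if i < length bs then Ks ! i else 0)" for i
      have "\<forall>i. c i \<in> K" using Ks K unfolding c_def is_subfield_def by (auto simp: nth_mem)
      moreover have "x = (\<Sum>i<length bs. c i * bs ! i)"
        using Ks by (simp add: combine_sum c_def)
      ultimately show "x \<in> {(\<Sum>i<length bs. c i * bs ! i) | c. \<forall>i. c i \<in> K}" by blast
    next
      fix x assume "x \<in> {(\<Sum>i<length bs. c i * bs ! i) | c. \<forall>i. c i \<in> K}"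
      then obtain c where c: "\<forall>i. c i \<in> K" "x = (\<Sum>i<length bs. c i * bs ! i)" by blast
      then show "x \<in> {R.combine Ks bs | Ks. length Ks = length bs \<and> set Ks \<subseteq> K}"
        by (intro CollectI exI[of _ "map c [0..<length bs]"]) (auto simp: combine_map)
    qed
    finally show ?thesis .
  qed
  have ind: "R.independent K bs \<longleftrightarrow> (\<forall>c. (\<forall>i. c i \<in> K) \<longrightarrow> (\<Sum>i<length bs. c i * bs ! i) = 0 \<longrightarrow> (\<forall>i<length bs. c i = 0))"
  proof
    assume I: "R.independent K bs"
    show "\<forall>c. (\<forall>i. c i \<in> K) \<longrightarrow> (\<Sum>i<length bs. c i * bs ! i) = 0 \<longrightarrow> (\<forall>i<length bs. c i = 0)"
    proof (intro allI impI)
      fix c i assume c: "\<forall>i. c i \<in> K" "(\<Sum>i<length bs. c i * bs ! i) = 0" and i: "i < length bs"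
      have "set (take (length bs) (map c [0..<length bs])) \<subseteq> {0}"
        using R.independent_imp_trivial_combine[OF KS I, of "map c [0..<length bs]"] c
        by (auto simp: combine_map)
      then show "c i = 0" using i by (auto simp: set_conv_nth)
    qed
  next
    assume H: "\<forall>c. (\<forall>i. c i \<in> K) \<longrightarrow> (\<Sum>i<length bs. c i * bs ! i) = 0 \<longrightarrow> (\<forall>i<length bs. c i = 0)"
    show "R.independent K bs"
    proof (rule R.trivial_combine_imp_independent[OF KS])
      fix Ks assume Ks0: "set Ks \<subseteq> K" "R.combine Ks bs = \<zero>\<^bsub>RR\<^esub>"
      hence Ks: "set Ks \<subseteq> K" "R.combine Ks bs = 0" by simp_all
      define c where "c i = (if i < length Ks then Ks ! i else 0)" for i
      have cK: "\<forall>i. c i \<in> K" using Ks K unfolding c_def is_subfield_def by (auto simp: nth_mem)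
      have "R.combine Ks bs = R.combine (take (length bs) Ks) bs"
        by (rule R.combine_take[symmetric])
      also have "take (length bs) Ks @ replicate (length bs - length Ks) 0 = map c [0..<length bs]"
        by (rule nth_equalityI) (auto simp: c_def nth_append)
      hence "R.combine (take (length bs) Ks) bs = R.combine (map c [0..<length bs]) bs"
        using R.combine_append_replicate[of bs "take (length bs) Ks" "length bs - length Ks"] by simp
      finally have "(\<Sum>i<length bs. c i * bs ! i) = 0" using Ks by (simp add: combine_map)
      hence "\<forall>i<length bs. c i = 0" using H cK by blast
      then show "set (take (length bs) Ks) \<subseteq> { \<zero>\<^bsub>RR\<^esub> }"
        by (auto simp: set_conv_nth c_def)
    qed simp
  qed
  show ?thesis unfolding is_basis_over_def span ind by blast
qed



lemma is_subfieldD: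
  assumes "is_subfield K"
  shows "0 \<in> K" "1 \<in> K" "\<And>x y. x \<in> K \<Longrightarrow> y \<in> K \<Longrightarrow> x + y \<in> K"
    "\<And>x y. x \<in> K \<Longrightarrow> y \<in> K \<Longrightarrow> x * y \<in> K" "\<And>x. x \<in> K \<Longrightarrow> - x \<in> K"
    "\<And>x. x \<in> K \<Longrightarrow> x \<noteq> 0 \<Longrightarrow> inverse x \<in> K"
  using assms unfolding is_subfield_def by auto

lemma is_subfield_diff: "is_subfield K \<Longrightarrow> x \<in> K \<Longrightarrow> y \<in> K \<Longrightarrow> x - y \<in> K"
  using is_subfieldD[of K] by (metis diff_conv_add_uminus)

lemma is_subfield_div: "is_subfield K \<Longrightarrow> x \<in> K \<Longrightarrow> y \<in> K \<Longrightarrow> x / y \<in> K"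
  using is_subfieldD[of K] by (cases "y = 0") (auto simp: divide_inverse)

lemma is_subfield_sum: "is_subfield K \<Longrightarrow> (\<And>i. i \<in> A \<Longrightarrow> f i \<in> K) \<Longrightarrow> sum f A \<in> K"
  using is_subfieldD[of K]
  by (induction A rule: infinite_finite_induct) auto

lemma is_subfield_prod: "is_subfield K \<Longrightarrow> (\<And>i. i \<in> A \<Longrightarrow> f i \<in> K) \<Longrightarrow> prod f A \<in> K"
  using is_subfieldD[of K]
  by (induction A rule: infinite_finite_induct) auto

lemma is_subfield_pow: "is_subfield K \<Longrightarrow> x \<in> K \<Longrightarrow> x ^ n \<in> K"
  using is_subfieldD[of K] by (induction n) auto

lemma subalgebra_RR:
  assumes "is_subfield M" "K \<subseteq> M"
  shows "subalgebra K M (RR::'a::field ring)"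
proof -
  have "subgroup M (add_monoid (RR::'a ring))"
    by (rule R.add.subgroupI) (use is_subfieldD[OF assms(1)] in auto)
  then show ?thesis
    unfolding subalgebra_def subalgebra_axioms_def using is_subfieldD[OF assms(1)] assms(2) by auto
qed

lemma ext_degree_dim:
  "ext_degree K L n \<longleftrightarrow> is_subfield K \<and> is_subfield L \<and> K \<subseteq> L \<and> R.dimension n K L"
proof
  assume "ext_degree K L n"
  then obtain bs where bs: "is_subfield K" "is_subfield L" "K \<subseteq> L" "is_basis_over K L bs" "length bs = n"
    unfolding ext_degree_def by blast
  then have "R.independent K bs" "R.Span K bs = L" using basis_iff by blast+
  then show "is_subfield K \<and> is_subfield L \<and> K \<subseteq> L \<and> R.dimension n K L"
    using R.dimensionI[OF subfield_RR[OF bs(1)]] bs by blast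
next
  assume H: "is_subfield K \<and> is_subfield L \<and> K \<subseteq> L \<and> R.dimension n K L"
  then obtain Vs where "set Vs \<subseteq> carrier RR" "R.independent K Vs" "length Vs = n" "R.Span K Vs = L"
    using R.exists_base[OF subfield_RR] by blast
  moreover have "set Vs \<subseteq> L"
    using R.Span_base_incl[OF subfield_RR[of K]] H calculation by auto
  ultimately show "ext_degree K L n"
    using H basis_iff unfolding ext_degree_def by blast
qed

lemma ext_degree_unique: "ext_degree K L n \<Longrightarrow> ext_degree K L m \<Longrightarrow> n = m"
  unfolding ext_degree_dim using R.dimension_is_inj subfield_RR by blast

lemma ext_degree_tower:
  assumes "ext_degree K M m" "ext_degree M L n"
  shows "ext_degree K L (m * n)"
  using assms unfolding ext_degree_dim
  using R.telescopic_base[OF subfield_RR subfield_RR] by blast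

lemma ext_degree_sub:
  assumes "ext_degree K L n" "is_subfield M" "K \<subseteq> M" "M \<subseteq> L"
  shows "\<exists>m. ext_degree K M m" "\<exists>k. ext_degree M L k"
proof -
  have K: "is_subfield K" "subfield K RR" and L: "is_subfield L" and D: "R.dimension n K L"
    using assms(1) subfield_RR unfolding ext_degree_dim by blast+
  have "R.finite_dimension K M"
    by (rule R.subalbegra_incl_imp_finite_dimension[OF K(2) R.finite_dimensionI[OF D] subalgebra_RR[OF assms(2,3)] assms(4)])
  then show "\<exists>m. ext_degree K M m"
    using assms K L unfolding ext_degree_dim R.finite_dimension_def by blast
  obtain Vs where Vs: "set Vs \<subseteq> carrier RR" "R.Span K Vs = L"
    using R.exists_base[OF K(2) D] by blast
  have "L \<subseteq> R.Span M Vs"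
  proof -
    have "R.Span K Vs \<subseteq> R.Span M Vs"
      by (rule R.subalgebra_Span_incl[OF K(2)])
        (use R.Span_is_subalgebra[OF subfield_RR[OF assms(2)] Vs(1)] assms(3) R.Span_base_incl[OF subfield_RR[OF assms(2)] Vs(1)]
          in \<open>auto simp: subalgebra_def subalgebra_axioms_def\<close>)
    then show ?thesis using Vs by simp
  qed
  moreover have "R.Span M Vs \<subseteq> L"
    using R.subalgebra_Span_incl[OF subfield_RR[OF assms(2)] subalgebra_RR[OF L]] assms(3,4)
      R.Span_base_incl[OF K(2) Vs(1)] Vs by auto
  ultimately have "R.Span M Vs = L" by blast
  moreover have "R.finite_dimension M (R.Span M Vs)"
    using R.Span_finite_dimension[OF subfield_RR[OF assms(2)] Vs(1)] .
  ultimately show "\<exists>k. ext_degree M L k"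
    using assms L unfolding ext_degree_dim R.finite_dimension_def by auto
qed

lemma ext_degree_self: "is_subfield K \<Longrightarrow> ext_degree K K 1"
  unfolding ext_degree_dim using R.dimension_one[OF subfield_RR] by blast

lemma ext_degree_one: "ext_degree K L 1 \<Longrightarrow> K = L"
proof -
  assume A: "ext_degree K L 1"
  then have KL: "is_subfield K" "K \<subseteq> L" "is_subfield L" unfolding ext_degree_def by auto
  have "ext_degree K K 1" by (rule ext_degree_self[OF KL(1)])
  hence "R.dimension 1 K K" unfolding ext_degree_dim by blast
  moreover have "R.dimension 1 K L" using A unfolding ext_degree_dim by blast
  moreover have "R.independent K [1]"
    by (rule R.li_Cons) (use R.Span.simps KL in auto)
  moreover have "set [1] \<subseteq> K" using is_subfieldD[OF KL(1)] by auto
  ultimately have "R.Span K [1] = K" "R.Span K [1] = L"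
    using R.independent_length_eq_dimension[OF subfield_RR[OF KL(1)], of 1 _ "[1]"] KL(2) by auto
  then show ?thesis by simp
qed

lemma ext_degree_pos: "ext_degree K L n \<Longrightarrow> n \<ge> 1"
proof (rule ccontr)
  assume A: "ext_degree K L n" "\<not> n \<ge> 1"
  hence "n = 0" by simp
  hence D: "R.dimension 0 K L" and K: "is_subfield K" and L: "is_subfield L"
    using A(1) unfolding ext_degree_dim by simp_all
  have "L = {\<zero>\<^bsub>RR\<^esub>}" by (rule R.dimension_zero[OF subfield_RR[OF K] D])
  hence "L = {0}" by simp
  with L show False unfolding is_subfield_def by auto
qed



definition emb :: "'a::field set \<Rightarrow> 'a set \<Rightarrow> ('a \<Rightarrow> 'a) \<Rightarrow> bool" where
  "emb K E \<sigma> \<longleftrightarrow> (\<forall>x\<in>E. \<forall>y\<in>E. \<sigma> (x + y) = \<sigma> x + \<sigma> y \<and> \<sigma> (x * y) = \<sigma> x * \<sigma> y) \<and>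
     \<sigma> 1 = 1 \<and> (\<forall>x\<in>K. \<sigma> x = x)"

lemma emb_add: "emb K E \<sigma> \<Longrightarrow> x \<in> E \<Longrightarrow> y \<in> E \<Longrightarrow> \<sigma> (x + y) = \<sigma> x + \<sigma> y"
  and emb_mult: "emb K E \<sigma> \<Longrightarrow> x \<in> E \<Longrightarrow> y \<in> E \<Longrightarrow> \<sigma> (x * y) = \<sigma> x * \<sigma> y"
  and emb_one: "emb K E \<sigma> \<Longrightarrow> \<sigma> 1 = 1"
  and emb_fix: "emb K E \<sigma> \<Longrightarrow> x \<in> K \<Longrightarrow> \<sigma> x = x"
  unfolding emb_def by auto

lemma emb_zero: "emb K E \<sigma> \<Longrightarrow> 0 \<in> E \<Longrightarrow> \<sigma> 0 = 0"
proof -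
  assume a: "emb K E \<sigma>" "0 \<in> E"
  have "\<sigma> 0 + \<sigma> 0 = \<sigma> 0 + 0" using emb_add[OF a(1) a(2) a(2)] by simp
  then show "\<sigma> 0 = 0" by (rule add_left_imp_eq)
qed

lemma emb_sum:
  assumes "emb K E \<sigma>" "is_subfield E" "\<And>i. i \<in> A \<Longrightarrow> f i \<in> E"
  shows "\<sigma> (sum f A) = (\<Sum>i\<in>A. \<sigma> (f i))"
  using assms(3)
proof (induction A rule: infinite_finite_induct)
  case (infinite A)
  then show ?case using emb_zero[OF assms(1)] is_subfieldD[OF assms(2)] by simp
next
  case empty
  then show ?case using emb_zero[OF assms(1)] is_subfieldD[OF assms(2)] by simp
next
  case (insert x F)
  then show ?case
    using emb_add[OF assms(1)] is_subfield_sum[OF assms(2), of F f] by simp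
qed

lemma emb_nonzero:
  assumes "emb K E \<sigma>" "is_subfield E" "x \<in> E" "x \<noteq> 0"
  shows "\<sigma> x \<noteq> 0"
proof
  assume "\<sigma> x = 0"
  have "1 = \<sigma> (x * inverse x)" using assms emb_one by simp
  also have "\<dots> = \<sigma> x * \<sigma> (inverse x)"
    using emb_mult[OF assms(1) assms(3)] is_subfieldD(6)[OF assms(2,3,4)] by simp
  finally show False using \<open>\<sigma> x = 0\<close> by simp
qed

lemma emb_inverse:
  assumes "emb K E \<sigma>" "is_subfield E" "x \<in> E"
  shows "\<sigma> (inverse x) = inverse (\<sigma> x)"
proof (cases "x = 0")
  case True then show ?thesis using emb_zero[OF assms(1)] is_subfieldD[OF assms(2)] by simp
next
  case False
  have "1 = \<sigma> (x * inverse x)" using assms emb_one False by simp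
  also have "\<dots> = \<sigma> x * \<sigma> (inverse x)"
    using emb_mult[OF assms(1) assms(3)] is_subfieldD(6)[OF assms(2,3) False] by simp
  finally have "\<sigma> x * \<sigma> (inverse x) = 1" by simp
  then show ?thesis by (rule inverse_unique[symmetric])
qed

lemma emb_neg:
  assumes "emb K E \<sigma>" "is_subfield E" "x \<in> E"
  shows "\<sigma> (- x) = - \<sigma> x"
proof -
  have "\<sigma> (x + - x) = \<sigma> x + \<sigma> (- x)" using emb_add[OF assms(1) assms(3) is_subfieldD(5)[OF assms(2,3)]] .
  moreover have "\<sigma> (x + - x) = 0" using emb_zero[OF assms(1)] is_subfieldD(1)[OF assms(2)] by simp
  ultimately have "\<sigma> x + \<sigma> (- x) = 0" by simp
  then show ?thesis by (rule minus_unique[symmetric])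
qed

lemma emb_diff:
  assumes "emb K E \<sigma>" "is_subfield E" "x \<in> E" "y \<in> E"
  shows "\<sigma> (x - y) = \<sigma> x - \<sigma> y"
proof -
  have "\<sigma> (x + - y) = \<sigma> x + \<sigma> (- y)" using emb_add[OF assms(1) assms(3) is_subfieldD(5)[OF assms(2,4)]] .
  then show ?thesis using emb_neg[OF assms(1,2,4)] by (simp only: diff_conv_add_uminus)
qed

lemma sum_skip:
  fixes g :: "nat \<Rightarrow> 'b::comm_monoid_add"
  assumes "k < m"
  shows "(\<Sum>i<m. g i) = g k + (\<Sum>i<m - 1. g (if i < k then i else Suc i))"
proof -
  let ?f = "\<lambda>i::nat. if i < k then i else Suc i"
  have inj: "inj_on ?f {..<m-1}" by (auto simp: inj_on_def split: if_splits)
  have img: "?f ` {..<m-1} = {..<m} - {k}"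
  proof (intro equalityI subsetI)
    fix x assume "x \<in> ?f ` {..<m-1}" then show "x \<in> {..<m} - {k}" using assms by (auto split: if_splits)
  next
    fix x assume x: "x \<in> {..<m} - {k}"
    show "x \<in> ?f ` {..<m-1}"
    proof (cases "x < k")
      case True then show ?thesis using x assms by (intro image_eqI[of _ _ x]) auto
    next
      case False then show ?thesis using x assms by (intro image_eqI[of _ _ "x - 1"]) auto
    qed
  qed
  have "(\<Sum>i<m. g i) = g k + (\<Sum>i\<in>{..<m} - {k}. g i)"
    using assms by (simp add: sum.remove)
  also have "(\<Sum>i\<in>{..<m} - {k}. g i) = (\<Sum>i<m - 1. g (?f i))"
    using sum.reindex[OF inj, of g] img by simp
  finally show ?thesis .
qed

lemma homog:
  fixes a :: "nat \<Rightarrow> nat \<Rightarrow> 'a::field" and n m :: nat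
  assumes K: "is_subfield K"
  shows "(\<forall>j i. a j i \<in> K) \<Longrightarrow> n < m \<Longrightarrow>
    \<exists>c. (\<forall>i. c i \<in> K) \<and> (\<exists>i<m. c i \<noteq> 0) \<and> (\<forall>j<n. (\<Sum>i<m. a j i * c i) = 0)"
proof (induction n arbitrary: m a)
  case 0
  then show ?case using is_subfieldD[OF K]
    by (intro exI[of _ "\<lambda>i. if i = 0 then 1 else 0"]) auto
next
  case (Suc n)
  show ?case
  proof (cases "\<forall>i<m. a n i = 0")
    case True
    obtain c where c: "\<forall>i. c i \<in> K" "\<exists>i<m. c i \<noteq> 0" "\<forall>j<n. (\<Sum>i<m. a j i * c i) = 0"
      using Suc.IH[of a m] Suc.prems by auto
    have "\<forall>j<Suc n. (\<Sum>i<m. a j i * c i) = 0"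
      using c(3) True by (auto simp: less_Suc_eq)
    then show ?thesis using c by blast
  next
    case False
    then obtain k where k: "k < m" "a n k \<noteq> 0" by auto
    define f where "f i = (if i < k then i else Suc i)" for i
    define a' where "a' j i = a j (f i) - a j k * a n (f i) / a n k" for j i
    have a'K: "\<forall>j i. a' j i \<in> K"
      using Suc.prems(1) unfolding a'_def
      by (auto intro!: is_subfield_diff[OF K] is_subfield_div[OF K] is_subfieldD(4)[OF K])
    obtain c' where c': "\<forall>i. c' i \<in> K" "\<exists>i<m-1. c' i \<noteq> 0" "\<forall>j<n. (\<Sum>i<m-1. a' j i * c' i) = 0"
    proof -
      have "n < m - 1" using Suc.prems by simp
      then show ?thesis using Suc.IH[OF a'K] that by blast
    qed
    define s where "s = (\<Sum>i<m-1. a n (f i) * c' i)"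
    define c where "c i = (if i = k then - s / a n k else if i < k then c' i else c' (i - 1))" for i
    have sK: "s \<in> K" unfolding s_def
      using c'(1) Suc.prems(1) by (auto intro!: is_subfield_sum[OF K] is_subfieldD(4)[OF K])
    have cK: "\<forall>i. c i \<in> K" unfolding c_def
      using c'(1) sK Suc.prems(1) by (auto intro!: is_subfield_div[OF K] is_subfieldD(5)[OF K])
    have cf: "c (f i) = c' i" for i unfolding c_def f_def by auto
    have sumc: "(\<Sum>i<m. a j i * c i) = a j k * c k + (\<Sum>i<m-1. a j (f i) * c' i)" for j
      using sum_skip[OF k(1), of "\<lambda>i. a j i * c i"] cf unfolding f_def by simp
    have eqs: "\<forall>j<Suc n. (\<Sum>i<m. a j i * c i) = 0"
    proof (intro allI impI)
      fix j assume j: "j < Suc n"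
      show "(\<Sum>i<m. a j i * c i) = 0"
      proof (cases "j = n")
        case True
        then show ?thesis using sumc[of n] k(2) unfolding c_def s_def by simp
      next
        case False
        hence "j < n" using j by simp
        have "(\<Sum>i<m-1. a' j i * c' i) = (\<Sum>i<m-1. a j (f i) * c' i) - a j k / a n k * s"
          unfolding a'_def s_def by (simp add: sum_subtractf sum_distrib_left algebra_simps)
        moreover have "a j k * c k = - (a j k / a n k * s)" unfolding c_def by simp
        ultimately show ?thesis using sumc[of j] c'(3) \<open>j < n\<close> by simp
      qed
    qed
    obtain i where i: "i < m - 1" "c' i \<noteq> 0" using c'(2) by blast
    have "f i < m" "c (f i) \<noteq> 0" using i cf unfolding f_def by auto
    then show ?thesis using eqs cK by blast
  qed
qed

lemma is_subfield_UNIV: "is_subfield UNIV"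
  unfolding is_subfield_def by auto

lemma dedekind:
  assumes E: "is_subfield E" and fin: "finite S"
  shows "(\<forall>\<sigma>\<in>S. (\<forall>x\<in>E. \<forall>y\<in>E. \<sigma> (x * y) = \<sigma> x * \<sigma> y) \<and> \<sigma> 1 = 1) \<Longrightarrow>
    (\<forall>\<sigma>\<in>S. \<forall>\<tau>\<in>S. \<sigma> \<noteq> \<tau> \<longrightarrow> (\<exists>x\<in>E. \<sigma> x \<noteq> \<tau> x)) \<Longrightarrow>
    (\<forall>x\<in>E. (\<Sum>\<sigma>\<in>S. c \<sigma> * \<sigma> x) = (0::'a::field)) \<Longrightarrow> (\<forall>\<sigma>\<in>S. c \<sigma> = 0)"
  using fin
proof (induction S arbitrary: c rule: finite_induct)
  case empty
  then show ?case by simp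
next
  case (insert \<tau> S)
  have hom: "\<forall>\<sigma>\<in>S. (\<forall>x\<in>E. \<forall>y\<in>E. \<sigma> (x * y) = \<sigma> x * \<sigma> y) \<and> \<sigma> 1 = 1"
    using insert.prems(1) by blast
  have dist: "\<forall>\<sigma>\<in>S. \<forall>\<tau>\<in>S. \<sigma> \<noteq> \<tau> \<longrightarrow> (\<exists>x\<in>E. \<sigma> x \<noteq> \<tau> x)"
    using insert.prems(2) by blast
  have rel: "(\<Sum>\<sigma>\<in>S. c \<sigma> * \<sigma> x) + c \<tau> * \<tau> x = 0" if "x \<in> E" for x
    using insert.prems(3) that insert.hyps by (simp add: add.commute)
  have cS: "\<forall>\<sigma>\<in>S. c \<sigma> = 0"
  proof
    fix \<sigma> assume \<sigma>: "\<sigma> \<in> S"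
    have \<sigma>\<tau>: "\<sigma> \<noteq> \<tau>" using \<sigma> insert.hyps by auto
    then obtain y where y: "y \<in> E" "\<sigma> y \<noteq> \<tau> y"
      using insert.prems(2) \<sigma> by blast
    have "\<forall>x\<in>E. (\<Sum>\<rho>\<in>S. (c \<rho> * (\<rho> y - \<tau> y)) * \<rho> x) = 0"
    proof
      fix x assume x: "x \<in> E"
      have xy: "x * y \<in> E" using is_subfieldD(4)[OF E x y(1)] .
      have r1: "(\<Sum>\<rho>\<in>S. c \<rho> * (\<rho> x * \<rho> y)) + c \<tau> * (\<tau> x * \<tau> y) = 0"
        using rel[OF xy] hom insert.prems(1) x y(1) by simp
      have r2: "(\<Sum>\<rho>\<in>S. c \<rho> * \<rho> x * \<tau> y) + c \<tau> * \<tau> x * \<tau> y = 0"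
      proof -
        have "((\<Sum>\<rho>\<in>S. c \<rho> * \<rho> x) + c \<tau> * \<tau> x) * \<tau> y = 0" using rel[OF x] by simp
        then show ?thesis by (simp only: distrib_right sum_distrib_right)
      qed
      have "(\<Sum>\<rho>\<in>S. (c \<rho> * (\<rho> y - \<tau> y)) * \<rho> x) =
          (\<Sum>\<rho>\<in>S. c \<rho> * (\<rho> x * \<rho> y)) - (\<Sum>\<rho>\<in>S. c \<rho> * \<rho> x * \<tau> y)"
        by (simp add: sum_subtractf[symmetric] algebra_simps)
      also have "\<dots> = ((\<Sum>\<rho>\<in>S. c \<rho> * (\<rho> x * \<rho> y)) + c \<tau> * (\<tau> x * \<tau> y)) -
          ((\<Sum>\<rho>\<in>S. c \<rho> * \<rho> x * \<tau> y) + c \<tau> * \<tau> x * \<tau> y)"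
        by (simp add: algebra_simps)
      also have "\<dots> = 0" by (simp only: r1 r2) simp
      finally show "(\<Sum>\<rho>\<in>S. (c \<rho> * (\<rho> y - \<tau> y)) * \<rho> x) = 0" .
    qed
    then have "\<forall>\<rho>\<in>S. c \<rho> * (\<rho> y - \<tau> y) = 0"
      using insert.IH[OF hom dist, of "\<lambda>\<rho>. c \<rho> * (\<rho> y - \<tau> y)"] by blast
    then show "c \<sigma> = 0" using \<sigma> y(2) by auto
  qed
  have "c \<tau> = 0"
    using rel[OF is_subfieldD(2)[OF E]] cS insert.prems(1) by simp
  then show ?case using cS by simp
qed

lemma emb_bound:
  assumes deg: "ext_degree K E n" and fin: "finite S" and embs: "\<forall>\<sigma>\<in>S. emb K E \<sigma>"
    and dist: "\<forall>\<sigma>\<in>S. \<forall>\<tau>\<in>S. \<sigma> \<noteq> \<tau> \<longrightarrow> (\<exists>x\<in>E. \<sigma> x \<noteq> \<tau> x)"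
  shows "card S \<le> n"
proof (rule ccontr)
  assume "\<not> card S \<le> n"
  hence nm: "n < card S" by simp
  define m where "m = card S"
  obtain bs where bs: "is_basis_over K E bs" "length bs = n" and K: "is_subfield K" and EE: "is_subfield E"
    and KE: "K \<subseteq> E"
    using deg unfolding ext_degree_def by blast
  obtain h where h: "bij_betw h {0..<m} S" using ex_bij_betw_nat_finite[OF fin] m_def by blast
  obtain c where c: "\<exists>i<m. c i \<noteq> 0" "\<forall>j<n. (\<Sum>i<m. (\<lambda>j i. h i (bs ! j)) j i * c i) = 0"
    using homog[OF is_subfield_UNIV, of "\<lambda>j i. h i (bs ! j)" n m] nm m_def by auto
  define C where "C \<sigma> = c (the_inv_into {0..<m} h \<sigma>)" for \<sigma>
  have Ch: "C (h i) = c i" if "i < m" for i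
    unfolding C_def using the_inv_into_f_f[OF bij_betw_imp_inj_on[OF h]] that by simp
  have sumS: "(\<Sum>\<sigma>\<in>S. g \<sigma>) = (\<Sum>i<m. g (h i))" for g :: "('a \<Rightarrow> 'a) \<Rightarrow> 'a"
    using sum.reindex_bij_betw[OF h, of g] by (simp add: lessThan_atLeast0)
  have "\<forall>x\<in>E. (\<Sum>\<sigma>\<in>S. C \<sigma> * \<sigma> x) = 0"
  proof
    fix x assume x: "x \<in> E"
    then obtain k where k: "\<forall>j. k j \<in> K" "x = (\<Sum>j<n. k j * bs ! j)"
      using bs unfolding is_basis_over_def by blast
    have "set bs \<subseteq> E" using bs(1)[unfolded is_basis_over_def] by (rule conjunct1)
    hence bsE: "bs ! j \<in> E" if "j < n" for j using bs(2) that by auto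
    have hx: "h i x = (\<Sum>j<n. k j * h i (bs ! j))" if i: "i < m" for i
    proof -
      have e: "emb K E (h i)" using embs h i by (auto simp: bij_betw_def)
      have "h i x = (\<Sum>j<n. h i (k j * bs ! j))"
        unfolding k(2) by (rule emb_sum[OF e EE]) (use k(1) KE bsE in \<open>auto intro!: is_subfieldD(4)[OF EE]\<close>)
      also have "\<dots> = (\<Sum>j<n. k j * h i (bs ! j))"
      proof (rule sum.cong)
        fix j assume j: "j \<in> {..<n}"
        have "k j \<in> E" using k(1) KE by auto
        then show "h i (k j * bs ! j) = k j * h i (bs ! j)"
          using emb_mult[OF e \<open>k j \<in> E\<close> bsE] emb_fix[OF e] k(1) j by simp
      qed simp
      finally show ?thesis .
    qed
    have "(\<Sum>\<sigma>\<in>S. C \<sigma> * \<sigma> x) = (\<Sum>i<m. c i * h i x)"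
      using sumS[of "\<lambda>\<sigma>. C \<sigma> * \<sigma> x"] Ch by simp
    also have "\<dots> = (\<Sum>i<m. \<Sum>j<n. k j * (h i (bs ! j) * c i))"
      by (rule sum.cong) (auto simp: hx sum_distrib_left algebra_simps)
    also have "\<dots> = (\<Sum>j<n. k j * (\<Sum>i<m. h i (bs ! j) * c i))"
      by (subst sum.swap) (simp add: sum_distrib_left)
    also have "\<dots> = 0" using c(2) by simp
    finally show "(\<Sum>\<sigma>\<in>S. C \<sigma> * \<sigma> x) = 0" .
  qed
  moreover have "\<forall>\<sigma>\<in>S. (\<forall>x\<in>E. \<forall>y\<in>E. \<sigma> (x * y) = \<sigma> x * \<sigma> y) \<and> \<sigma> 1 = 1"
    using embs unfolding emb_def by blast
  ultimately have "\<forall>\<sigma>\<in>S. C \<sigma> = 0" using dedekind[OF EE fin _ dist] by blast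
  moreover obtain i where "i < m" "c i \<noteq> 0" using c(1) by blast
  ultimately show False using Ch h by (auto simp: bij_betw_def)
qed



lemma Aut_D:
  assumes "\<sigma> \<in> Aut K L"
  shows "bij_betw \<sigma> L L" "\<And>x y. x \<in> L \<Longrightarrow> y \<in> L \<Longrightarrow> \<sigma> (x + y) = \<sigma> x + \<sigma> y"
    "\<And>x y. x \<in> L \<Longrightarrow> y \<in> L \<Longrightarrow> \<sigma> (x * y) = \<sigma> x * \<sigma> y"
    "\<And>x. x \<in> K \<Longrightarrow> \<sigma> x = x" "\<And>x. x \<notin> L \<Longrightarrow> \<sigma> x = x"
  using assms unfolding Aut_def by auto

lemma Aut_in: "\<sigma> \<in> Aut K L \<Longrightarrow> x \<in> L \<Longrightarrow> \<sigma> x \<in> L"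
  using Aut_D(1) by (metis bij_betwE)

lemma Aut_inj: assumes "\<sigma> \<in> Aut K L" shows "inj \<sigma>"
proof (rule injI)
  fix x y assume e: "\<sigma> x = \<sigma> y"
  show "x = y"
  proof (cases "x \<in> L"; cases "y \<in> L")
    assume "x \<in> L" "y \<in> L" then show ?thesis using e Aut_D(1)[OF assms] by (metis bij_betw_iff_bijections)
  next
    assume "x \<in> L" "y \<notin> L" then show ?thesis using e Aut_D(5)[OF assms] Aut_in[OF assms] by metis
  next
    assume "x \<notin> L" "y \<in> L" then show ?thesis using e Aut_D(5)[OF assms] Aut_in[OF assms] by metis
  next
    assume "x \<notin> L" "y \<notin> L" then show ?thesis using e Aut_D(5)[OF assms] by metis
  qed
qed

lemma Aut_bij: assumes "\<sigma> \<in> Aut K L" shows "bij \<sigma>"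
proof -
  have "surj \<sigma>"
  proof -
    have "y \<in> range \<sigma>" for y
    proof (cases "y \<in> L")
      case True then show ?thesis using Aut_D(1)[OF assms] by (metis bij_betw_def image_iff rangeI)
    next
      case False then show ?thesis using Aut_D(5)[OF assms] by (metis rangeI)
    qed
    then show ?thesis by blast
  qed
  then show ?thesis using Aut_inj[OF assms] by (simp add: bij_def)
qed

lemma Aut_one: assumes "\<sigma> \<in> Aut K L" "is_subfield L" shows "\<sigma> 1 = 1"
proof -
  have L1: "1 \<in> L" "0 \<in> L" using is_subfieldD[OF assms(2)] by auto
  have "\<sigma> 0 + \<sigma> 0 = \<sigma> 0 + 0" using Aut_D(2)[OF assms(1) L1(2) L1(2)] by simp
  hence z: "\<sigma> 0 = 0" by (rule add_left_imp_eq)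
  have "\<sigma> 1 * \<sigma> 1 = \<sigma> 1 * 1" using Aut_D(3)[OF assms(1) L1(1) L1(1)] by simp
  moreover have "\<sigma> 1 \<noteq> 0" using z Aut_inj[OF assms(1)] by (metis injD zero_neq_one)
  ultimately show ?thesis by simp
qed

lemma Aut_emb: assumes "\<sigma> \<in> Aut K L" "is_subfield L" shows "emb K L \<sigma>"
  unfolding emb_def using Aut_D[OF assms(1)] Aut_one[OF assms] by auto

definition fixf :: "'a::field set \<Rightarrow> ('a \<Rightarrow> 'a) set \<Rightarrow> 'a set" where
  "fixf L H = {x \<in> L. \<forall>h\<in>H. h x = x}"

lemma fixf_subfield:
  assumes L: "is_subfield L" and H: "\<forall>h\<in>H. emb {} L h"
  shows "is_subfield (fixf L H)"
proof -
  have e: "\<And>h. h \<in> H \<Longrightarrow> emb {} L h" using H by blast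
  show ?thesis
  unfolding is_subfield_def fixf_def
  using is_subfieldD[OF L]
  by (auto simp: emb_add[OF e] emb_mult[OF e] emb_zero[OF e] emb_one[OF e] emb_neg[OF e L] emb_inverse[OF e L])
qed

lemma emb_mono: "emb K L \<sigma> \<Longrightarrow> K' \<subseteq> K \<Longrightarrow> emb K' L \<sigma>"
  unfolding emb_def by blast

lemma comp_surj:
  assumes HA: "H \<subseteq> Aut K L" and fin: "finite H" and comp: "\<forall>g\<in>H. \<forall>h\<in>H. g \<circ> h \<in> H"
    and \<sigma>: "\<sigma> \<in> H" and h: "h \<in> H"
  shows "\<exists>\<tau>\<in>H. \<sigma> \<circ> \<tau> = h"
proof -
  have inj: "inj_on (\<lambda>\<tau>. \<sigma> \<circ> \<tau>) H"
    using Aut_inj[of \<sigma> K L] HA \<sigma> by (auto simp: inj_on_def fun_eq_iff inj_def)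
  have sub: "(\<lambda>\<tau>. \<sigma> \<circ> \<tau>) ` H \<subseteq> H" using comp \<sigma> by auto
  have "(\<lambda>\<tau>. \<sigma> \<circ> \<tau>) ` H = H"
    by (rule card_subset_eq[OF fin sub]) (simp add: card_image[OF inj])
  then show ?thesis using h by (metis imageE)
qed

lemma artin_dep:
  fixes x :: "nat \<Rightarrow> 'a::field"
  assumes L: "is_subfield L" and HA: "H \<subseteq> Aut K L" and fin: "finite H" and idH: "id \<in> H"
    and comp: "\<forall>g\<in>H. \<forall>h\<in>H. g \<circ> h \<in> H"
    and xL: "\<forall>i<m. x i \<in> L" and m: "card H < m"
  shows "\<exists>c. (\<forall>i. c i \<in> fixf L H) \<and> (\<exists>i<m. c i \<noteq> 0) \<and> (\<Sum>i<m. c i * x i) = 0"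
proof -
  define r where "r = card H"
  obtain g where g: "bij_betw g {0..<r} H" using ex_bij_betw_nat_finite[OF fin] r_def by blast
  have hemb: "emb K L h" if "h \<in> H" for h using Aut_emb[OF _ L] HA that by blast
  have hL: "h y \<in> L" if "h \<in> H" "y \<in> L" for h y using Aut_in HA that by blast
  define a where "a j i = (if j < r \<and> i < m then g j (x i) else 0)" for j i
  have aL: "\<forall>j i. a j i \<in> L"
    unfolding a_def using g xL hL is_subfieldD(1)[OF L] by (auto simp: bij_betw_def)
  obtain c0 where c0: "\<forall>i. c0 i \<in> L" "\<exists>i<m. c0 i \<noteq> 0" "\<forall>j<r. (\<Sum>i<m. a j i * c0 i) = 0"
    using homog[OF L aL, of r m] m r_def by blast
  define Sol where "Sol c \<longleftrightarrow> (\<forall>i. c i \<in> L) \<and> (\<forall>h\<in>H. (\<Sum>i<m. h (x i) * c i) = 0)" for c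
  define NT where "NT c \<longleftrightarrow> (\<exists>i<m. c i \<noteq> (0::'a))" for c
  define supp where "supp c = card {i. i < m \<and> c i \<noteq> (0::'a)}" for c
  have "Sol c0"
    unfolding Sol_def
  proof (intro conjI ballI)
    show "\<forall>i. c0 i \<in> L" using c0 by blast
  next
    fix h assume h: "h \<in> H"
    then obtain j where j: "j < r" "h = g j" using g by (auto simp: bij_betw_def)
    have "(\<Sum>i<m. h (x i) * c0 i) = (\<Sum>i<m. a j i * c0 i)"
      by (rule sum.cong) (auto simp: a_def j)
    then show "(\<Sum>i<m. h (x i) * c0 i) = 0" using c0(3) j by simp
  qed
  hence "\<exists>n c. Sol c \<and> NT c \<and> supp c = n" using c0(2) unfolding NT_def by blast
  then obtain n where n: "\<exists>c. Sol c \<and> NT c \<and> supp c = n"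
    and nmin: "\<forall>n'<n. \<not> (\<exists>c. Sol c \<and> NT c \<and> supp c = n')"
    using exists_least_iff[of "\<lambda>n. \<exists>c. Sol c \<and> NT c \<and> supp c = n"] by blast
  then obtain c where c: "Sol c" "NT c" "supp c = n" by blast
  then obtain k where k: "k < m" "c k \<noteq> 0" unfolding NT_def by blast
  define c' where "c' i = c i * inverse (c k)" for i
  have c'L: "\<forall>i. c' i \<in> L"
    using c(1) k is_subfieldD[OF L] unfolding c'_def Sol_def by auto
  have "Sol c'"
    unfolding Sol_def
  proof (intro conjI ballI)
    show "\<forall>i. c' i \<in> L" by (rule c'L)
  next
    fix h assume h: "h \<in> H"
    have "(\<Sum>i<m. h (x i) * c' i) = (\<Sum>i<m. h (x i) * c i) * inverse (c k)"
      unfolding c'_def by (simp add: sum_distrib_right mult.assoc)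
    then show "(\<Sum>i<m. h (x i) * c' i) = 0" using c(1) h unfolding Sol_def by simp
  qed
  have supp_eq: "{i. i < m \<and> c' i \<noteq> 0} = {i. i < m \<and> c i \<noteq> 0}"
    unfolding c'_def using k by auto
  have c'k: "c' k = 1" unfolding c'_def using k by simp
  have fixed: "\<sigma> (c' i) = c' i" if \<sigma>: "\<sigma> \<in> H" and i: "i < m" for \<sigma> i
  proof (rule ccontr)
    assume ne: "\<sigma> (c' i) \<noteq> c' i"
    define d where "d i = \<sigma> (c' i) - c' i" for i
    have e: "emb K L \<sigma>" by (rule hemb[OF \<sigma>])
    have "Sol d"
      unfolding Sol_def
    proof (intro conjI ballI)
      show "\<forall>i. d i \<in> L" unfolding d_def using c'L hL[OF \<sigma>] is_subfield_diff[OF L] by auto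
    next
      fix h assume h: "h \<in> H"
      obtain \<tau> where \<tau>: "\<tau> \<in> H" "\<sigma> \<circ> \<tau> = h" using comp_surj[OF HA fin comp \<sigma> h] by blast
      have "(\<Sum>i<m. h (x i) * \<sigma> (c' i)) = (\<Sum>i<m. \<sigma> (\<tau> (x i) * c' i))"
      proof (rule sum.cong)
        fix i assume i: "i \<in> {..<m}"
        have "\<sigma> (\<tau> (x i) * c' i) = \<sigma> (\<tau> (x i)) * \<sigma> (c' i)"
          using emb_mult[OF e] hL[OF \<tau>(1)] xL i c'L by simp
        then show "h (x i) * \<sigma> (c' i) = \<sigma> (\<tau> (x i) * c' i)" using \<tau>(2) by auto
      qed simp
      also have "\<dots> = \<sigma> (\<Sum>i<m. \<tau> (x i) * c' i)"
        by (rule emb_sum[OF e L, symmetric]) (use hL[OF \<tau>(1)] xL c'L is_subfieldD(4)[OF L] in auto)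
      also have "(\<Sum>i<m. \<tau> (x i) * c' i) = 0" using \<open>Sol c'\<close> \<tau>(1) unfolding Sol_def by blast
      also have "\<sigma> 0 = 0" using emb_zero[OF e] is_subfieldD(1)[OF L] by simp
      finally have s1: "(\<Sum>i<m. h (x i) * \<sigma> (c' i)) = 0" .
      have s2: "(\<Sum>i<m. h (x i) * c' i) = 0" using \<open>Sol c'\<close> h unfolding Sol_def by blast
      have "(\<Sum>i<m. h (x i) * d i) = (\<Sum>i<m. h (x i) * \<sigma> (c' i)) - (\<Sum>i<m. h (x i) * c' i)"
        unfolding d_def by (simp add: sum_subtractf[symmetric] algebra_simps)
      then show "(\<Sum>i<m. h (x i) * d i) = 0" using s1 s2 by simp
    qed
    moreover have "NT d" unfolding NT_def d_def using ne i by (intro exI[of _ i]) simp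
    moreover have "supp d < n"
    proof -
      have sub: "{i. i < m \<and> d i \<noteq> 0} \<subseteq> {i. i < m \<and> c' i \<noteq> 0} - {k}"
      proof
        fix j assume j: "j \<in> {i. i < m \<and> d i \<noteq> 0}"
        have "c' j \<noteq> 0"
        proof
          assume "c' j = 0"
          then have "d j = 0" unfolding d_def using emb_zero[OF e] is_subfieldD(1)[OF L] by simp
          then show False using j by simp
        qed
        moreover have "j \<noteq> k"
        proof
          assume "j = k"
          then have "d j = 0" unfolding d_def using c'k emb_one[OF e] by simp
          then show False using j by simp
        qed
        ultimately show "j \<in> {i. i < m \<and> c' i \<noteq> 0} - {k}" using j by simp
      qed
      have "card ({i. i < m \<and> c' i \<noteq> 0} - {k}) < card {i. i < m \<and> c' i \<noteq> 0}"
        by (rule card_Diff1_less) (use k c'k in auto)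
      moreover have "card {i. i < m \<and> d i \<noteq> 0} \<le> card ({i. i < m \<and> c' i \<noteq> 0} - {k})"
        by (rule card_mono[OF _ sub]) auto
      ultimately show ?thesis unfolding supp_def using supp_eq c(3) unfolding supp_def by simp
    qed
    ultimately show False using nmin by blast
  qed
  define c'' where "c'' i = (if i < m then c' i else 0)" for i
  have "\<forall>i. c'' i \<in> fixf L H"
    unfolding c''_def fixf_def using c'L fixed is_subfieldD(1)[OF L] emb_zero[OF hemb] by auto
  moreover have "\<exists>i<m. c'' i \<noteq> 0" using k c'k unfolding c''_def by (intro exI[of _ k]) simp
  moreover have "(\<Sum>i<m. c'' i * x i) = 0"
  proof -
    have "(\<Sum>i<m. id (x i) * c' i) = 0" using \<open>Sol c'\<close> idH unfolding Sol_def by blast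
    then show ?thesis unfolding c''_def by (simp add: mult.commute)
  qed
  ultimately show ?thesis by blast
qed

lemma artin_bound:
  assumes L: "is_subfield L" and HA: "H \<subseteq> Aut K L" and fin: "finite H" and idH: "id \<in> H"
    and comp: "\<forall>g\<in>H. \<forall>h\<in>H. g \<circ> h \<in> H"
    and deg: "ext_degree (fixf L H) L n"
  shows "n \<le> card H"
proof (rule ccontr)
  assume "\<not> n \<le> card H"
  hence nH: "card H < n" by simp
  obtain bs where bs: "is_basis_over (fixf L H) L bs" "length bs = n"
    using deg unfolding ext_degree_def by blast
  have "set bs \<subseteq> L" using bs(1)[unfolded is_basis_over_def] by (rule conjunct1)
  hence xL: "\<forall>i<n. bs ! i \<in> L" using bs(2) by auto
  obtain c where c: "\<forall>i. c i \<in> fixf L H" "\<exists>i<n. c i \<noteq> 0" "(\<Sum>i<n. c i * bs ! i) = 0"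
    using artin_dep[OF L HA fin idH comp xL nH] by blast
  have "\<forall>i<length bs. c i = 0" using bs(1) c(1,3) bs(2) unfolding is_basis_over_def by blast
  then show False using c(2) bs(2) by auto
qed



lemma id_Aut: "id \<in> Aut K L"
  unfolding Aut_def by auto

lemma Aut_comp: assumes "\<sigma> \<in> Aut K L" "\<tau> \<in> Aut K L" shows "\<sigma> \<circ> \<tau> \<in> Aut K L"
proof -
  have "bij_betw (\<sigma> \<circ> \<tau>) L L" using Aut_D(1)[OF assms(1)] Aut_D(1)[OF assms(2)] by (rule bij_betw_trans[rotated])
  then show ?thesis
    unfolding Aut_def using Aut_D[OF assms(1)] Aut_D[OF assms(2)] Aut_in[OF assms(2)] by auto
qed

lemma Aut_inv: assumes "\<sigma> \<in> Aut K L"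
  shows "inv_into UNIV \<sigma> \<in> Aut K L" "\<sigma> \<circ> inv_into UNIV \<sigma> = id" "inv_into UNIV \<sigma> \<circ> \<sigma> = id"
proof -
  have b: "bij \<sigma>" by (rule Aut_bij[OF assms])
  show i1: "\<sigma> \<circ> inv_into UNIV \<sigma> = id" "inv_into UNIV \<sigma> \<circ> \<sigma> = id"
    using surj_iff[THEN iffD1, OF bij_is_surj[OF b]] inj_iff[THEN iffD1, OF bij_is_inj[OF b]] by auto
  have ii: "inv_into UNIV \<sigma> (\<sigma> x) = x" "\<sigma> (inv_into UNIV \<sigma> x) = x" for x using i1 by (metis comp_apply id_apply)+
  have inL: "inv_into UNIV \<sigma> y \<in> L \<longleftrightarrow> y \<in> L" for y
    by (metis Aut_D(5)[OF assms] Aut_in[OF assms] ii(2))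
  have "bij_betw (inv_into UNIV \<sigma>) L L"
    by (rule bij_betw_byWitness[of _ \<sigma>]) (use ii inL Aut_in[OF assms] in auto)
  moreover have "inv_into UNIV \<sigma> (x + y) = inv_into UNIV \<sigma> x + inv_into UNIV \<sigma> y" if "x \<in> L" "y \<in> L" for x y
  proof -
    have "\<sigma> (inv_into UNIV \<sigma> x + inv_into UNIV \<sigma> y) = x + y" using Aut_D(2)[OF assms] inL that ii by simp
    then show ?thesis by (metis ii(1))
  qed
  moreover have "inv_into UNIV \<sigma> (x * y) = inv_into UNIV \<sigma> x * inv_into UNIV \<sigma> y" if "x \<in> L" "y \<in> L" for x y
  proof -
    have "\<sigma> (inv_into UNIV \<sigma> x * inv_into UNIV \<sigma> y) = x * y" using Aut_D(3)[OF assms] inL that ii by simp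
    then show ?thesis by (metis ii(1))
  qed
  moreover have "inv_into UNIV \<sigma> x = x" if "x \<in> K" for x using Aut_D(4)[OF assms that] by (metis ii(1))
  moreover have "inv_into UNIV \<sigma> x = x" if "x \<notin> L" for x using Aut_D(5)[OF assms that] by (metis ii(1))
  ultimately show "inv_into UNIV \<sigma> \<in> Aut K L" unfolding Aut_def by auto
qed

lemma Aut_mono: "K \<subseteq> K' \<Longrightarrow> Aut K' L \<subseteq> Aut K L"
  unfolding Aut_def by auto

lemma Aut_eqI: assumes "\<sigma> \<in> Aut K L" "\<tau> \<in> Aut K L" "\<forall>x\<in>L. \<sigma> x = \<tau> x" shows "\<sigma> = \<tau>"
proof (rule ext)
  fix x show "\<sigma> x = \<tau> x"
    by (cases "x \<in> L") (use assms Aut_D(5)[OF assms(1)] Aut_D(5)[OF assms(2)] in auto)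
qed

lemma Aut_finite:
  assumes "ext_degree K L n"
  shows "finite (Aut K L)" "card (Aut K L) \<le> n"
proof -
  have L: "is_subfield L" using assms unfolding ext_degree_def by blast
  have bnd: "card S \<le> n" if "S \<subseteq> Aut K L" "finite S" for S
  proof (rule emb_bound[OF assms that(2)])
    show "\<forall>\<sigma>\<in>S. emb K L \<sigma>" using that Aut_emb[OF _ L] by blast
    show "\<forall>\<sigma>\<in>S. \<forall>\<tau>\<in>S. \<sigma> \<noteq> \<tau> \<longrightarrow> (\<exists>x\<in>L. \<sigma> x \<noteq> \<tau> x)"
      using that Aut_eqI by blast
  qed
  show f: "finite (Aut K L)"
  proof (rule ccontr)
    assume "infinite (Aut K L)"
    then obtain S where "S \<subseteq> Aut K L" "finite S" "card S = Suc n"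
      using infinite_arbitrarily_large by blast
    then show False using bnd[of S] by simp
  qed
  show "card (Aut K L) \<le> n" using bnd[OF _ f] by simp
qed

lemma group_Gal: "group (Gal K L)"
proof (rule groupI)
  show "\<And>x y. x \<in> carrier (Gal K L) \<Longrightarrow> y \<in> carrier (Gal K L) \<Longrightarrow> x \<otimes>\<^bsub>Gal K L\<^esub> y \<in> carrier (Gal K L)"
    unfolding Gal_def using Aut_comp by auto
  show "\<one>\<^bsub>Gal K L\<^esub> \<in> carrier (Gal K L)" unfolding Gal_def using id_Aut by auto
  show "\<And>x y z. x \<in> carrier (Gal K L) \<Longrightarrow> y \<in> carrier (Gal K L) \<Longrightarrow> z \<in> carrier (Gal K L) \<Longrightarrow>
      x \<otimes>\<^bsub>Gal K L\<^esub> y \<otimes>\<^bsub>Gal K L\<^esub> z = x \<otimes>\<^bsub>Gal K L\<^esub> (y \<otimes>\<^bsub>Gal K L\<^esub> z)"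
    unfolding Gal_def by (simp add: comp_assoc)
  show "\<And>x. x \<in> carrier (Gal K L) \<Longrightarrow> \<one>\<^bsub>Gal K L\<^esub> \<otimes>\<^bsub>Gal K L\<^esub> x = x"
    unfolding Gal_def by simp
  show "\<And>x. x \<in> carrier (Gal K L) \<Longrightarrow> \<exists>y\<in>carrier (Gal K L). y \<otimes>\<^bsub>Gal K L\<^esub> x = \<one>\<^bsub>Gal K L\<^esub>"
  proof -
    fix x assume "x \<in> carrier (Gal K L)"
    hence x: "x \<in> Aut K L" unfolding Gal_def by simp
    show "\<exists>y\<in>carrier (Gal K L). y \<otimes>\<^bsub>Gal K L\<^esub> x = \<one>\<^bsub>Gal K L\<^esub>"
      unfolding Gal_def using Aut_inv(1,3)[OF x] by (intro bexI[of _ "inv_into UNIV x"]) simp_all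
  qed
qed

lemma Gal_simps [simp]: "carrier (Gal K L) = Aut K L" "monoid.mult (Gal K L) = (\<circ>)" "one (Gal K L) = id"
  unfolding Gal_def by simp_all

lemma fiber_count:
  assumes fin: "finite G" and fib: "\<And>\<sigma>. \<sigma> \<in> G \<Longrightarrow> card {\<tau>\<in>G. f \<tau> = f \<sigma>} \<le> a"
  shows "card G \<le> card (f ` G) * a"
proof -
  have "G = (\<Union>r\<in>f ` G. {\<tau>\<in>G. f \<tau> = r})" by auto
  moreover have "card (\<Union>r\<in>f ` G. {\<tau>\<in>G. f \<tau> = r}) \<le> (\<Sum>r\<in>f ` G. card {\<tau>\<in>G. f \<tau> = r})"
    by (rule card_UN_le) (simp add: fin)
  ultimately have "card G \<le> (\<Sum>r\<in>f ` G. card {\<tau>\<in>G. f \<tau> = r})" by simp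
  also have "\<dots> \<le> (\<Sum>r\<in>f ` G. a)"
    by (rule sum_mono) (use fib in auto)
  finally show ?thesis by simp
qed

definition rK :: "'a set \<Rightarrow> ('a \<Rightarrow> 'a) \<Rightarrow> 'a \<Rightarrow> 'a" where
  "rK K \<sigma> = (\<lambda>x. if x \<in> K then \<sigma> x else x)"

lemma rK_eq_iff: "rK K \<sigma> = rK K \<tau> \<longleftrightarrow> (\<forall>x\<in>K. \<sigma> x = \<tau> x)"
proof
  assume e: "rK K \<sigma> = rK K \<tau>"
  show "\<forall>x\<in>K. \<sigma> x = \<tau> x"
  proof
    fix x assume "x \<in> K" then show "\<sigma> x = \<tau> x" using fun_cong[OF e, of x] unfolding rK_def by simp
  qed
next
  assume "\<forall>x\<in>K. \<sigma> x = \<tau> x" then show "rK K \<sigma> = rK K \<tau>" unfolding rK_def by (auto simp: fun_eq_iff)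
qed

lemma emb_restrict:
  assumes e: "emb F L \<sigma>" and K: "is_subfield K" "F \<subseteq> K" "K \<subseteq> L"
  shows "emb F K (rK K \<sigma>)"
  unfolding emb_def
proof (intro conjI ballI)
  fix x y assume xy: "x \<in> K" "y \<in> K"
  then have "x \<in> L" "y \<in> L" "x + y \<in> K" "x * y \<in> K" using K is_subfieldD[OF K(1)] by auto
  then show "rK K \<sigma> (x + y) = rK K \<sigma> x + rK K \<sigma> y" "rK K \<sigma> (x * y) = rK K \<sigma> x * rK K \<sigma> y"
    unfolding rK_def using xy emb_add[OF e] emb_mult[OF e] by simp_all
next
  show "rK K \<sigma> 1 = 1" unfolding rK_def using emb_one[OF e] by simp
next
  fix x assume "x \<in> F" then show "rK K \<sigma> x = x" unfolding rK_def using emb_fix[OF e] by simp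
qed

lemma restrict_fiber:
  assumes "\<sigma> \<in> Aut F L" "is_subfield K" "F \<subseteq> K" "K \<subseteq> L"
  shows "{\<tau> \<in> Aut F L. rK K \<tau> = rK K \<sigma>} \<subseteq> (\<lambda>\<kappa>. \<sigma> \<circ> \<kappa>) ` Aut K L"
proof
  fix \<tau> assume \<tau>: "\<tau> \<in> {\<tau> \<in> Aut F L. rK K \<tau> = rK K \<sigma>}"
  define \<kappa> where "\<kappa> = inv_into UNIV \<sigma> \<circ> \<tau>"
  have k1: "\<kappa> \<in> Aut F L" unfolding \<kappa>_def using Aut_comp Aut_inv(1) assms(1) \<tau> by blast
  have "\<kappa> x = x" if "x \<in> K" for x
  proof -
    have "\<tau> x = \<sigma> x" using \<tau> that unfolding rK_eq_iff by auto
    then show ?thesis unfolding \<kappa>_def using inv_into_f_f[OF Aut_inj[OF assms(1)]] by simp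
  qed
  hence "\<kappa> \<in> Aut K L" using k1 unfolding Aut_def by auto
  moreover have "\<sigma> \<circ> \<kappa> = \<tau>" unfolding \<kappa>_def by (simp add: comp_assoc[symmetric] Aut_inv(2)[OF assms(1)])
  ultimately show "\<tau> \<in> (\<lambda>\<kappa>. \<sigma> \<circ> \<kappa>) ` Aut K L" by blast
qed

lemma galois_ext_D:
  assumes "galois_ext F L" obtains n where "ext_degree F L n" "card (Aut F L) = n"
  using assms unfolding galois_ext_def by blast

lemma galois_sub:
  assumes gal: "galois_ext F L" and K: "is_subfield K" "F \<subseteq> K" "K \<subseteq> L"
  obtains m k where "ext_degree F K m" "ext_degree K L k" "card (Aut K L) = k"
    "card ((rK K) ` Aut F L) = m"
proof -
  obtain n where n: "ext_degree F L n" "card (Aut F L) = n" using gal galois_ext_D by blast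
  obtain m where m: "ext_degree F K m" using ext_degree_sub(1)[OF n(1) K] by blast
  obtain k where k: "ext_degree K L k" using ext_degree_sub(2)[OF n(1) K] by blast
  have nmk: "n = m * k" using ext_degree_unique[OF n(1) ext_degree_tower[OF m k]] .
  have L: "is_subfield L" using n(1) unfolding ext_degree_def by blast
  have finG: "finite (Aut F L)" using Aut_finite[OF n(1)] by blast
  have finK: "finite (Aut K L)" "card (Aut K L) \<le> k" using Aut_finite[OF k] by blast+
  have "card (Aut F L) \<le> card ((rK K) ` Aut F L) * card (Aut K L)"
  proof (rule fiber_count[OF finG])
    fix \<sigma> assume \<sigma>: "\<sigma> \<in> Aut F L"
    have "card {\<tau> \<in> Aut F L. rK K \<tau> = rK K \<sigma>} \<le> card ((\<lambda>\<kappa>. \<sigma> \<circ> \<kappa>) ` Aut K L)"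
      by (rule card_mono[OF finite_imageI[OF finK(1)] restrict_fiber[OF \<sigma> K]])
    also have "\<dots> \<le> card (Aut K L)" by (rule card_image_le[OF finK(1)])
    finally show "card {\<tau> \<in> Aut F L. rK K \<tau> = rK K \<sigma>} \<le> card (Aut K L)" .
  qed
  moreover have rb: "card ((rK K) ` Aut F L) \<le> m"
  proof (rule emb_bound[OF m finite_imageI[OF finG]])
    show "\<forall>\<sigma>\<in>rK K ` Aut F L. emb F K \<sigma>"
      using emb_restrict[OF Aut_emb[OF _ L] K] by blast
    show "\<forall>\<sigma>\<in>rK K ` Aut F L. \<forall>\<tau>\<in>rK K ` Aut F L. \<sigma> \<noteq> \<tau> \<longrightarrow> (\<exists>x\<in>K. \<sigma> x \<noteq> \<tau> x)"
      unfolding rK_def by (auto simp: fun_eq_iff)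
  qed
  ultimately have le: "m * k \<le> card ((rK K) ` Aut F L) * card (Aut K L)" using n nmk by simp
  have m1: "m \<ge> 1" using ext_degree_pos[OF m] .
  have k1: "k \<ge> 1" using ext_degree_pos[OF k] .
  have "m * k \<le> m * card (Aut K L)" using order_trans[OF le mult_le_mono1[OF rb]] .
  hence "k \<le> card (Aut K L)" using m1 by simp
  hence ck: "card (Aut K L) = k" using finK by simp
  have "m * k \<le> card ((rK K) ` Aut F L) * k" using le ck by simp
  hence "m \<le> card ((rK K) ` Aut F L)" using k1 by simp
  hence "card ((rK K) ` Aut F L) = m" using rb by simp
  then show ?thesis using that m k ck by blast
qed



lemma Aut_closed:
  shows "\<forall>g\<in>Aut K L. \<forall>h\<in>Aut K L. g \<circ> h \<in> Aut K L"
  using Aut_comp by blast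

lemma fixf_Aut:
  assumes gal: "galois_ext F L" and K: "is_subfield K" "F \<subseteq> K" "K \<subseteq> L"
  shows "fixf L (Aut K L) = K"
proof -
  obtain m k where m: "ext_degree F K m" and k: "ext_degree K L k" and ck: "card (Aut K L) = k"
    using galois_sub[OF gal K] by metis
  have L: "is_subfield L" using k unfolding ext_degree_def by blast
  define Fx where "Fx = fixf L (Aut K L)"
  have finH: "finite (Aut K L)" using Aut_finite[OF k] by blast
  have Fx: "is_subfield Fx" unfolding Fx_def
    by (rule fixf_subfield[OF L]) (use Aut_emb[OF _ L] emb_mono in blast)
  have KFx: "K \<subseteq> Fx" unfolding Fx_def fixf_def using K(3) Aut_D(4) by blast
  have FxL: "Fx \<subseteq> L" unfolding Fx_def fixf_def by blast
  obtain a where a: "ext_degree K Fx a" using ext_degree_sub(1)[OF k Fx KFx FxL] by blast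
  obtain b where b: "ext_degree Fx L b" using ext_degree_sub(2)[OF k Fx KFx FxL] by blast
  have "b \<le> card (Aut K L)"
    by (rule artin_bound[OF L subset_refl finH id_Aut Aut_closed]) (use b Fx_def in simp)
  moreover have "Aut K L \<subseteq> Aut Fx L"
    unfolding Fx_def fixf_def Aut_def by auto
  hence "card (Aut K L) \<le> card (Aut Fx L)" using Aut_finite[OF b] by (simp add: card_mono)
  hence "card (Aut K L) \<le> b" using Aut_finite(2)[OF b] by simp
  ultimately have "b = k" using ck by simp
  moreover have "a * b = k" using ext_degree_unique[OF ext_degree_tower[OF a b] k] .
  moreover have "k \<ge> 1" using ext_degree_pos[OF k] .
  ultimately have "a = 1" by simp
  then have "K = Fx" using ext_degree_one a by blast
  then show ?thesis unfolding Fx_def by simp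
qed

lemma emb_extends:
  assumes gal: "galois_ext F M" and K: "is_subfield K" "F \<subseteq> K" "K \<subseteq> M" and e: "emb F K \<sigma>"
  shows "\<exists>\<tau>\<in>Aut F M. \<forall>x\<in>K. \<sigma> x = \<tau> x"
proof (rule ccontr)
  assume nex: "\<not> (\<exists>\<tau>\<in>Aut F M. \<forall>x\<in>K. \<sigma> x = \<tau> x)"
  obtain m where m: "ext_degree F K m" and cm: "card ((rK K) ` Aut F M) = m"
    using galois_sub[OF gal K] by metis
  obtain n where n: "ext_degree F M n" using gal galois_ext_D by blast
  have M: "is_subfield M" using n unfolding ext_degree_def by blast
  have finG: "finite (Aut F M)" using Aut_finite[OF n] by blast
  define S where "S = insert (rK K \<sigma>) ((rK K) ` Aut F M)"
  have notin: "rK K \<sigma> \<notin> (rK K) ` Aut F M"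
  proof
    assume "rK K \<sigma> \<in> (rK K) ` Aut F M"
    then obtain \<tau> where "\<tau> \<in> Aut F M" "rK K \<sigma> = rK K \<tau>" by blast
    then show False using nex rK_eq_iff by metis
  qed
  have "card S \<le> m"
  proof (rule emb_bound[OF m])
    show "finite S" unfolding S_def using finG by simp
    show "\<forall>\<sigma>\<in>S. emb F K \<sigma>"
      unfolding S_def using emb_restrict[OF Aut_emb[OF _ M] K] emb_restrict[OF e K(1,2) subset_refl] by blast
    show "\<forall>\<sigma>\<in>S. \<forall>\<tau>\<in>S. \<sigma> \<noteq> \<tau> \<longrightarrow> (\<exists>x\<in>K. \<sigma> x \<noteq> \<tau> x)"
      unfolding S_def rK_def by (auto simp: fun_eq_iff)
  qed
  moreover have "card S = Suc m" unfolding S_def using notin cm finG by simp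
  ultimately show False by simp
qed

lemma rK_Aut:
  assumes \<sigma>: "\<sigma> \<in> Aut F L" and K: "is_subfield K" "F \<subseteq> K" "K \<subseteq> L"
    and stab: "\<forall>\<sigma>\<in>Aut F L. \<forall>x\<in>K. \<sigma> x \<in> K"
  shows "rK K \<sigma> \<in> Aut F K"
proof -
  have inj: "inj \<sigma>" by (rule Aut_inj[OF \<sigma>])
  have iv: "inv_into UNIV \<sigma> \<in> Aut F L" by (rule Aut_inv(1)[OF \<sigma>])
  have "bij_betw (rK K \<sigma>) K K"
    unfolding bij_betw_def
  proof
    show "inj_on (rK K \<sigma>) K" unfolding rK_def using inj by (auto simp: inj_on_def inj_def)
    show "rK K \<sigma> ` K = K"
    proof (intro equalityI subsetI)
      fix y assume "y \<in> rK K \<sigma> ` K" then show "y \<in> K" unfolding rK_def using stab \<sigma> by auto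
    next
      fix y assume y: "y \<in> K"
      have "inv_into UNIV \<sigma> y \<in> K" using stab iv y by blast
      moreover have "\<sigma> (inv_into UNIV \<sigma> y) = y" using Aut_inv(2)[OF \<sigma>] by (simp add: pointfree_idE)
      ultimately show "y \<in> rK K \<sigma> ` K" unfolding rK_def by (intro image_eqI[of _ _ "inv_into UNIV \<sigma> y"]) simp_all
    qed
  qed
  moreover have "\<forall>x\<in>K. \<forall>y\<in>K. rK K \<sigma> (x + y) = rK K \<sigma> x + rK K \<sigma> y \<and> rK K \<sigma> (x * y) = rK K \<sigma> x * rK K \<sigma> y"
  proof (intro ballI conjI)
    fix x y assume xy: "x \<in> K" "y \<in> K"
    then have "x \<in> L" "y \<in> L" "x + y \<in> K" "x * y \<in> K" using K is_subfieldD[OF K(1)] by auto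
    then show "rK K \<sigma> (x + y) = rK K \<sigma> x + rK K \<sigma> y" "rK K \<sigma> (x * y) = rK K \<sigma> x * rK K \<sigma> y"
      unfolding rK_def using xy Aut_D(2,3)[OF \<sigma>] by simp_all
  qed
  moreover have "\<forall>x\<in>F. rK K \<sigma> x = x" unfolding rK_def using Aut_D(4)[OF \<sigma>] by simp
  moreover have "\<forall>x. x \<notin> K \<longrightarrow> rK K \<sigma> x = x" unfolding rK_def by simp
  ultimately show ?thesis unfolding Aut_def by blast
qed

lemma stable_galois:
  assumes gal: "galois_ext F L" and K: "is_subfield K" "F \<subseteq> K" "K \<subseteq> L"
    and stab: "\<forall>\<sigma>\<in>Aut F L. \<forall>x\<in>K. \<sigma> x \<in> K"
  shows "galois_ext F K" "rK K ` Aut F L = Aut F K"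
proof -
  obtain m where m: "ext_degree F K m" and cm: "card ((rK K) ` Aut F L) = m"
    using galois_sub[OF gal K] by metis
  have sub: "rK K ` Aut F L \<subseteq> Aut F K" using rK_Aut[OF _ K stab] by blast
  have fin: "finite (Aut F K)" "card (Aut F K) \<le> m" using Aut_finite[OF m] by blast+
  show eq: "rK K ` Aut F L = Aut F K"
    by (rule card_subset_eq[OF fin(1) sub]) (use cm fin card_mono[OF fin(1) sub] in simp)
  show "galois_ext F K" unfolding galois_ext_def using m cm eq by metis
qed

lemma rK_comp:
  assumes "\<forall>x\<in>K. \<tau> x \<in> K"
  shows "rK K (\<sigma> \<circ> \<tau>) = rK K \<sigma> \<circ> rK K \<tau>"
  unfolding rK_def using assms by (auto simp: fun_eq_iff)

lemma rK_hom:
  assumes gal: "galois_ext F L" and K: "is_subfield K" "F \<subseteq> K" "K \<subseteq> L"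
    and stab: "\<forall>\<sigma>\<in>Aut F L. \<forall>x\<in>K. \<sigma> x \<in> K"
  shows "group_hom (Gal F L) (Gal F K) (rK K)"
proof -
  have "rK K \<in> hom (Gal F L) (Gal F K)"
    unfolding hom_def using rK_Aut[OF _ K stab] by (auto intro!: rK_comp simp: stab)
  then show ?thesis
    unfolding group_hom_def group_hom_axioms_def using group_Gal by blast
qed

lemma solvable_quotient_gal:
  assumes gal: "galois_ext F L" and K: "is_subfield K" "F \<subseteq> K" "K \<subseteq> L"
    and stab: "\<forall>\<sigma>\<in>Aut F L. \<forall>x\<in>K. \<sigma> x \<in> K" and solv: "solvable (Gal F L)"
  shows "solvable (Gal F K)"
  using group_hom.surj_hom_imp_solvable[OF rK_hom[OF gal K stab]] stable_galois(2)[OF gal K stab] solv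
  by simp



context group
begin

lemma inv_cancel_left: "x \<in> carrier G \<Longrightarrow> w \<in> carrier G \<Longrightarrow> inv x \<otimes> (x \<otimes> w) = w"
  by (simp add: m_assoc[symmetric])

lemma pow_card_subgroup:
  assumes P: "subgroup P G" and fin: "finite P" and z: "z \<in> P"
  shows "z [^] card P = \<one>"
proof -
  interpret P: group "G\<lparr>carrier := P\<rparr>" by (rule subgroup_imp_group[OF P])
  have "z [^]\<^bsub>G\<lparr>carrier := P\<rparr>\<^esub> Coset.order (G\<lparr>carrier := P\<rparr>) = \<one>\<^bsub>G\<lparr>carrier := P\<rparr>\<^esub>"
    by (rule P.pow_order_eq_1) (simp add: z)
  then show ?thesis using nat_pow_consistent[of z "card P" P] by (simp add: Coset.order_def)
qed

lemma coprime_pow_one: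
  assumes x: "x \<in> carrier G" and a: "x [^] a = \<one>" and b: "x [^] (b::nat) = \<one>" and cop: "coprime a b"
  shows "x = \<one>"
proof -
  have "ord x dvd a" "ord x dvd b" using a b pow_eq_id[OF x] by blast+
  hence "ord x dvd gcd a b" by simp
  hence "ord x = 1" using cop by simp
  then show ?thesis using ord_eq_1[OF x] by simp
qed

lemma conj_pow:
  assumes x: "x \<in> carrier G" and h: "h \<in> carrier G"
  shows "(x \<otimes> h \<otimes> inv x) [^] (k::nat) = x \<otimes> h [^] k \<otimes> inv x"
proof (induction k)
  case 0
  then show ?case using x by simp
next
  case (Suc k)
  have "(x \<otimes> h \<otimes> inv x) [^] Suc k = (x \<otimes> h [^] k \<otimes> inv x) \<otimes> (x \<otimes> h \<otimes> inv x)"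
    using Suc by simp
  also have "\<dots> = x \<otimes> (h [^] k \<otimes> (inv x \<otimes> x) \<otimes> h) \<otimes> inv x"
    using x h by (simp add: m_assoc inv_cancel_left)
  also have "\<dots> = x \<otimes> h [^] Suc k \<otimes> inv x"
    using x h by (simp add: m_assoc)
  finally show ?case .
qed

lemma conj_complement:
  assumes P: "subgroup P G" and fin: "finite P" and cP: "card P = p" and pr: "prime p"
    and h: "h \<in> carrier G" and y: "y \<in> P"
    and norm: "\<forall>x\<in>P. inv h \<otimes> x \<otimes> h \<in> P"
    and hd: "h [^] d = \<one>" and hyd: "(h \<otimes> y) [^] (d::nat) = \<one>" and cop: "coprime d p"
  shows "\<exists>x\<in>P. x \<otimes> h \<otimes> inv x = h \<otimes> y"
proof -
  have PG: "P \<subseteq> carrier G" using subgroup.subset[OF P] .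
  have yG: "y \<in> carrier G" using y PG by blast
  define \<psi> where "\<psi> x = x \<otimes> h \<otimes> inv x" for x
  show ?thesis
  proof (cases "inj_on \<psi> P")
    case True
    have sub: "\<psi> ` P \<subseteq> (\<lambda>z. h \<otimes> z) ` P"
    proof
      fix w assume "w \<in> \<psi> ` P"
      then obtain x where x: "x \<in> P" "w = \<psi> x" by blast
      have xG: "x \<in> carrier G" using x PG by blast
      have "inv h \<otimes> x \<otimes> h \<in> P" using norm x by blast
      hence z: "inv h \<otimes> x \<otimes> h \<otimes> inv x \<in> P"
        using subgroup.m_closed[OF P] subgroup.m_inv_closed[OF P x(1)] by blast
      have "h \<otimes> (inv h \<otimes> x \<otimes> h \<otimes> inv x) = \<psi> x"
        unfolding \<psi>_def using h xG by (simp add: m_assoc[symmetric])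
      then have "w = h \<otimes> (inv h \<otimes> x \<otimes> h \<otimes> inv x)" using x by simp
      then show "w \<in> (\<lambda>z. h \<otimes> z) ` P" using z by blast
    qed
    have "card ((\<lambda>z. h \<otimes> z) ` P) \<le> card P" by (rule card_image_le[OF fin])
    moreover have "card (\<psi> ` P) = card P" by (rule card_image[OF True])
    ultimately have "\<psi> ` P = (\<lambda>z. h \<otimes> z) ` P"
      using card_subset_eq[OF finite_imageI[OF fin] sub] card_mono[OF finite_imageI[OF fin] sub] by simp
    moreover have "h \<otimes> y \<in> (\<lambda>z. h \<otimes> z) ` P" using y by blast
    ultimately have "h \<otimes> y \<in> \<psi> ` P" by simp
    then obtain x where "x \<in> P" "\<psi> x = h \<otimes> y" by (force simp: image_def)
    then show ?thesis unfolding \<psi>_def by blast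
  next
    case False
    then obtain x x' where xx: "x \<in> P" "x' \<in> P" "x \<noteq> x'" "\<psi> x = \<psi> x'"
      unfolding inj_on_def by blast
    have xG: "x \<in> carrier G" "x' \<in> carrier G" using xx PG by blast+
    define z where "z = inv x' \<otimes> x"
    have zP: "z \<in> P" unfolding z_def using subgroup.m_closed[OF P subgroup.m_inv_closed[OF P xx(2)] xx(1)] .
    have zG: "z \<in> carrier G" using zP PG by blast
    have z1: "z \<noteq> \<one>"
    proof
      assume "z = \<one>"
      moreover have "x = x' \<otimes> (inv x' \<otimes> x)" using xG by (simp add: m_assoc[symmetric])
      ultimately have "x = x'" unfolding z_def using xG by simp
      then show False using xx(3) by simp
    qed
    have zh: "z \<otimes> h = h \<otimes> z"
    proof -
      have e: "x \<otimes> h \<otimes> inv x = x' \<otimes> h \<otimes> inv x'" using xx(4) unfolding \<psi>_def .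
      have "z \<otimes> h = inv x' \<otimes> (x \<otimes> h \<otimes> inv x) \<otimes> x"
        unfolding z_def using xG h by (simp add: m_assoc)
      also have "\<dots> = inv x' \<otimes> (x' \<otimes> h \<otimes> inv x') \<otimes> x" using e by simp
      also have "\<dots> = h \<otimes> z"
        unfolding z_def using xG h by (simp add: m_assoc[symmetric])
      finally show ?thesis .
    qed
    have zp: "z [^] p = \<one>" using pow_card_subgroup[OF P fin zP] cP by simp
    have "ord z dvd p" using zp pow_eq_id[OF zG] by blast
    moreover have "ord z \<noteq> 1" using ord_eq_1[OF zG] z1 by simp
    moreover have "ord z = 1 \<or> ord z = p" using pr \<open>ord z dvd p\<close> prime_nat_iff by blast
    ultimately have oz: "ord z = p" by blast
    have gen_sub: "generate G {z} \<subseteq> P" using generate_subgroup_incl[OF _ P] zP by blast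
    have "card (generate G {z}) = p" using generate_pow_card[OF zG] oz by simp
    hence gen: "generate G {z} = P"
      using card_subset_eq[OF fin gen_sub] cP by simp
    have "y \<in> generate G {z}" using gen y by simp
    moreover have "p \<noteq> 0" using pr by auto
    ultimately obtain k :: nat where k: "y = z [^] k"
      using generate_pow_nat[OF zG] oz by auto
    have yh: "h \<otimes> y = y \<otimes> h" unfolding k using group_commutes_pow[OF zh zG h, of k] by simp
    have "(h \<otimes> y) [^] d = h [^] d \<otimes> y [^] d" by (rule pow_mult_distrib[OF yh h yG])
    hence yd: "y [^] d = \<one>" using hyd hd yG by simp
    have yp: "y [^] p = \<one>" using pow_card_subgroup[OF P fin y] cP by simp
    have "y = \<one>" by (rule coprime_pow_one[OF yG yd yp cop])
    then show ?thesis using h subgroup.one_closed[OF P] by (intro bexI[of _ \<one>]) simp_all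
  qed
qed

end



lemma Gal_pow: "\<sigma> [^]\<^bsub>Gal K L\<^esub> (n::nat) = \<sigma> ^^ n"
  by (induction n) (simp_all add: fun_eq_iff funpow_swap1)

lemma Gal_inv: assumes "\<sigma> \<in> Aut K L" shows "inv\<^bsub>Gal K L\<^esub> \<sigma> = inv_into UNIV \<sigma>"
proof -
  interpret group "Gal K L" by (rule group_Gal)
  show ?thesis by (rule inv_equality) (use Aut_inv[OF assms] assms in simp_all)
qed

lemma cyclic_comm: assumes "cyclic_ext K L" shows "comm_group (Gal K L)"
proof -
  obtain \<sigma> where \<sigma>: "\<sigma> \<in> Aut K L" "\<forall>\<tau>\<in>Aut K L. \<exists>n. \<tau> = \<sigma> ^^ n"
    using assms unfolding cyclic_ext_def by blast
  show ?thesis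
  proof (rule group.group_comm_groupI[OF group_Gal])
    fix x y assume "x \<in> carrier (Gal K L)" "y \<in> carrier (Gal K L)"
    then have "\<exists>a. x = \<sigma> ^^ a" "\<exists>b. y = \<sigma> ^^ b" using \<sigma> by simp_all
    then obtain a b where "x = \<sigma> ^^ a" "y = \<sigma> ^^ b" by blast
    then show "x \<otimes>\<^bsub>Gal K L\<^esub> y = y \<otimes>\<^bsub>Gal K L\<^esub> x"
      by (simp add: funpow_add[symmetric] add.commute)
  qed
qed

lemma comm_solvable: assumes "comm_group G" shows "solvable G"
proof -
  interpret comm_group G by (rule assms)
  have "(derived G ^^ 1) (carrier G) = {\<one>\<^bsub>G\<^esub>}" using derived_eq_singleton[OF subset_refl] by simp
  then have "solvable_seq G (carrier G)"
    by (rule trivial_derived_seq_imp_solvable[OF subgroup_self])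
  then show ?thesis unfolding solvable_def .
qed

lemma is_subfield_Inter:
  assumes A: "\<forall>K\<in>S. is_subfield K" and ne: "S \<noteq> {}" shows "is_subfield (\<Inter>S)"
proof -
  have D: "is_subfield K" if "K \<in> S" for K using A that by blast
  have a: "0 \<in> \<Inter>S" "1 \<in> \<Inter>S" using is_subfieldD(1,2)[OF D] by auto
  have b: "x + y \<in> \<Inter>S" "x * y \<in> \<Inter>S" if "x \<in> \<Inter>S" "y \<in> \<Inter>S" for x y
    using that is_subfieldD(3,4)[OF D] by auto
  have c: "- x \<in> \<Inter>S" if "x \<in> \<Inter>S" for x using that is_subfieldD(5)[OF D] by auto
  have e: "inverse x \<in> \<Inter>S" if "x \<in> \<Inter>S" "x \<noteq> 0" for x using that is_subfieldD(6)[OF D] by auto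
  show ?thesis unfolding is_subfield_def
    by (intro conjI ballI impI; (rule a b c e; assumption)?)
qed

lemma compositum_props:
  shows "is_subfield (compositum E F')" "E \<subseteq> compositum E F'" "F' \<subseteq> compositum E F'"
    "\<And>K. is_subfield K \<Longrightarrow> E \<union> F' \<subseteq> K \<Longrightarrow> compositum E F' \<subseteq> K"
proof -
  have "UNIV \<in> {K. is_subfield K \<and> E \<union> F' \<subseteq> K}" using is_subfield_UNIV by blast
  then show "is_subfield (compositum E F')" unfolding compositum_def
    by (intro is_subfield_Inter) auto
next
  show "E \<subseteq> compositum E F'" unfolding compositum_def by blast
next
  show "F' \<subseteq> compositum E F'" unfolding compositum_def by blast
next
  fix K assume "is_subfield K" "E \<union> F' \<subseteq> K"
  then show "compositum E F' \<subseteq> K" unfolding compositum_def by blast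
qed

lemma emb_dom_mono: "emb K L \<sigma> \<Longrightarrow> E \<subseteq> L \<Longrightarrow> emb K E \<sigma>"
  unfolding emb_def by blast

lemma fix_set_subfield:
  assumes "\<sigma> \<in> Aut K L" "is_subfield L"
  shows "is_subfield {x \<in> L. \<sigma> x = x}"
proof -
  have "{x \<in> L. \<sigma> x = x} = fixf L {\<sigma>}" unfolding fixf_def by auto
  moreover have "is_subfield (fixf L {\<sigma>})"
    by (rule fixf_subfield[OF assms(2)]) (use Aut_emb[OF assms] emb_mono in blast)
  ultimately show ?thesis by simp
qed

locale L14 =
  fixes F F' L :: "'a::field set" and p d :: nat
  assumes pr: "prime p" and sep: "sep_alg_closure_of F"
    and cycQ: "cyclic_ext F F'" and degQ: "ext_degree F F' d" and ddvd: "d dvd p - 1"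
    and cycP: "cyclic_ext F' L" and degP: "ext_degree F' L p" and gal: "galois_ext F L"
begin

lemma basic:
  shows "is_subfield F" "is_subfield F'" "is_subfield L" "F \<subseteq> F'" "F' \<subseteq> L"
  using degQ degP unfolding ext_degree_def by auto

lemma degL: "ext_degree F L (d * p)"
  by (rule ext_degree_tower[OF degQ degP])

lemma galois_card: "galois_ext K M \<Longrightarrow> ext_degree K M n \<Longrightarrow> card (Aut K M) = n"
proof -
  assume "galois_ext K M" "ext_degree K M n"
  moreover obtain m where "ext_degree K M m" "card (Aut K M) = m" using galois_ext_D[OF \<open>galois_ext K M\<close>] by blast
  ultimately show ?thesis using ext_degree_unique by blast
qed

lemma cardG: "card (Aut F L) = d * p"
  using galois_card[OF gal degL] .

lemma cardP: "card (Aut F' L) = p"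
  using galois_card[OF _ degP] cycP unfolding cyclic_ext_def by blast

lemma cardQ: "card (Aut F F') = d"
  using galois_card[OF _ degQ] cycQ unfolding cyclic_ext_def by blast

lemma d_facts: "d \<ge> 1" "d < p" "coprime d p"
proof -
  show d1: "d \<ge> 1" using ext_degree_pos[OF degQ] .
  have p2: "p \<ge> 2" using pr by (simp add: prime_ge_2_nat)
  have "d \<le> p - 1" using dvd_imp_le[OF ddvd] p2 by simp
  then show dp: "d < p" using p2 by simp
  have "\<not> p dvd d" using dp d1 by (auto dest: dvd_imp_le)
  then show "coprime d p" using prime_imp_coprime[OF pr] by (simp add: coprime_commute)
qed

lemma finG: "finite (Aut F L)" using Aut_finite[OF degL] by blast
lemma finP: "finite (Aut F' L)" using Aut_finite[OF degP] by blast
lemma finQ: "finite (Aut F F')" using Aut_finite[OF degQ] by blast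

lemma P_sub: "Aut F' L \<subseteq> Aut F L" using Aut_mono basic by blast

lemma subgroup_Aut: assumes "F \<subseteq> K" shows "subgroup (Aut K L) (Gal F L)"
proof (rule subgroup.intro)
  show "Aut K L \<subseteq> carrier (Gal F L)" using Aut_mono[OF assms] by simp
  show "\<And>x y. x \<in> Aut K L \<Longrightarrow> y \<in> Aut K L \<Longrightarrow> x \<otimes>\<^bsub>Gal F L\<^esub> y \<in> Aut K L"
    using Aut_comp by simp
  show "\<one>\<^bsub>Gal F L\<^esub> \<in> Aut K L" using id_Aut by simp
  fix x assume x: "x \<in> Aut K L"
  have "x \<in> Aut F L" using x Aut_mono[OF assms] by blast
  then show "inv\<^bsub>Gal F L\<^esub> x \<in> Aut K L" using Gal_inv[of x F L] Aut_inv(1)[OF x] by simp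
qed

lemma stab: "\<forall>\<sigma>\<in>Aut F L. \<forall>x\<in>F'. \<sigma> x \<in> F'"
proof (intro ballI)
  fix \<sigma> x assume \<sigma>: "\<sigma> \<in> Aut F L" and x: "x \<in> F'"
  have galQ: "galois_ext F F'" using cycQ unfolding cyclic_ext_def by blast
  have "emb F F' \<sigma>" using emb_dom_mono[OF Aut_emb[OF \<sigma> basic(3)] basic(5)] .
  then obtain \<tau> where "\<tau> \<in> Aut F F'" "\<forall>x\<in>F'. \<sigma> x = \<tau> x"
    using emb_extends[OF galQ basic(2) basic(4) subset_refl] by blast
  then show "\<sigma> x \<in> F'" using x Aut_in[of \<tau> F F' x] by simp
qed

abbreviation "\<rho> \<equiv> rK F'"

lemma rho_hom: "group_hom (Gal F L) (Gal F F') \<rho>"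
  by (rule rK_hom[OF gal basic(2,4,5) stab])

lemma rho_surj: "\<rho> ` Aut F L = Aut F F'"
  by (rule stable_galois(2)[OF gal basic(2,4,5) stab])

lemma rho_ker: assumes "\<sigma> \<in> Aut F L" shows "\<rho> \<sigma> = id \<longleftrightarrow> \<sigma> \<in> Aut F' L"
proof
  assume "\<rho> \<sigma> = id"
  have "\<forall>x\<in>F'. \<sigma> x = x"
  proof
    fix x assume x: "x \<in> F'"
    have "\<rho> \<sigma> x = id x" using \<open>\<rho> \<sigma> = id\<close> by simp
    then show "\<sigma> x = x" using x unfolding rK_def by simp
  qed
  then show "\<sigma> \<in> Aut F' L" using assms unfolding Aut_def by blast
next
  assume "\<sigma> \<in> Aut F' L"
  then show "\<rho> \<sigma> = id" unfolding rK_def using Aut_D(4) by (auto simp: fun_eq_iff)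
qed

end



context L14
begin

lemma grpG: "group (Gal F L)" by (rule group_Gal)
lemma grpQ: "group (Gal F F')" by (rule group_Gal)
lemma P_subgroup: "subgroup (Aut F' L) (Gal F L)" by (rule subgroup_Aut[OF basic(4)])

lemma deg_p_compositum:
  assumes E: "is_subfield E" "F \<subseteq> E" "E \<subseteq> L" and deg: "ext_degree F E p"
  shows "compositum E F' = L"
proof -
  define C where "C = compositum E F'"
  have C: "is_subfield C" "E \<subseteq> C" "F' \<subseteq> C"
    unfolding C_def by (rule compositum_props(1), rule compositum_props(2), rule compositum_props(3))
  have CL: "C \<subseteq> L" unfolding C_def by (rule compositum_props(4)) (use basic E in auto)
  obtain c1 where c1: "ext_degree F' C c1" using ext_degree_sub(1)[OF degP C(1) C(3) CL] by blast
  obtain c2 where c2: "ext_degree C L c2" using ext_degree_sub(2)[OF degP C(1) C(3) CL] by blast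
  have "c1 * c2 = p" using ext_degree_unique[OF ext_degree_tower[OF c1 c2] degP] .
  hence "c1 dvd p" using dvd_triv_left[of c1 c2] by simp
  hence "c1 = 1 \<or> c1 = p" using pr prime_nat_iff by blast
  then show ?thesis
  proof
    assume "c1 = 1"
    hence "F' = C" using ext_degree_one c1 by blast
    hence EF: "E \<subseteq> F'" using C(2) by simp
    obtain e where e: "ext_degree E F' e" using ext_degree_sub(2)[OF degQ E(1) E(2) EF] by blast
    have "p * e = d" using ext_degree_unique[OF ext_degree_tower[OF deg e] degQ] .
    moreover have "e \<ge> 1" using ext_degree_pos[OF e] .
    ultimately have "p \<le> d" using mult_le_mono2[of 1 e p] by simp
    then show ?thesis using d_facts(2) by simp
  next
    assume "c1 = p"
    hence "c2 = 1" using \<open>c1 * c2 = p\<close> pr by (simp add: prime_gt_0_nat)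
    hence "C = L" using ext_degree_one c2 by blast
    then show ?thesis unfolding C_def .
  qed
qed

definition "\<theta> = (SOME \<sigma>. \<sigma> \<in> Aut F F' \<and> (\<forall>\<tau>\<in>Aut F F'. \<exists>n. \<tau> = \<sigma> ^^ n))"

lemma theta: "\<theta> \<in> Aut F F'" "\<forall>\<tau>\<in>Aut F F'. \<exists>n. \<tau> = \<theta> ^^ n"
proof -
  have "\<exists>\<sigma>. \<sigma> \<in> Aut F F' \<and> (\<forall>\<tau>\<in>Aut F F'. \<exists>n. \<tau> = \<sigma> ^^ n)"
    using cycQ unfolding cyclic_ext_def by blast
  then have "\<theta> \<in> Aut F F' \<and> (\<forall>\<tau>\<in>Aut F F'. \<exists>n. \<tau> = \<theta> ^^ n)"
    unfolding \<theta>_def by (rule someI_ex)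
  then show "\<theta> \<in> Aut F F'" "\<forall>\<tau>\<in>Aut F F'. \<exists>n. \<tau> = \<theta> ^^ n" by blast+
qed

lemma ord_theta: "group.ord (Gal F F') \<theta> = d"
proof -
  interpret Q: group "Gal F F'" by (rule grpQ)
  have th: "\<theta> \<in> carrier (Gal F F')" using theta by simp
  have "generate (Gal F F') {\<theta>} \<subseteq> carrier (Gal F F')"
    using Q.generate_is_subgroup[of "{\<theta>}"] th subgroup.subset by blast
  moreover have "carrier (Gal F F') \<subseteq> generate (Gal F F') {\<theta>}"
  proof
    fix \<tau> assume "\<tau> \<in> carrier (Gal F F')"
    then obtain n where n: "\<tau> = \<theta> ^^ n" using theta by auto
    have "\<theta> [^]\<^bsub>Gal F F'\<^esub> (int n) \<in> generate (Gal F F') {\<theta>}"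
      using Q.generate_pow[OF th] by blast
    then show "\<tau> \<in> generate (Gal F F') {\<theta>}" using n by (simp add: int_pow_int Gal_pow)
  qed
  ultimately have "generate (Gal F F') {\<theta>} = Aut F F'" by simp
  then show ?thesis using Q.generate_pow_card[OF th] cardQ by simp
qed

lemma theta_pow_one: "\<theta> [^]\<^bsub>Gal F F'\<^esub> k = id \<longleftrightarrow> d dvd k"
proof -
  interpret Q: group "Gal F F'" by (rule grpQ)
  show ?thesis using Q.pow_eq_id[of \<theta> k] theta ord_theta by simp
qed

lemma ker_char: "\<sigma> \<in> Aut F L \<Longrightarrow> \<rho> \<sigma> = id \<longleftrightarrow> \<sigma> \<in> Aut F' L"
  by (rule rho_ker)

end



context L14
begin

definition "g1 = (SOME g. g \<in> Aut F L \<and> \<rho> g = \<theta>)"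

lemma g1: "g1 \<in> Aut F L" "\<rho> g1 = \<theta>"
proof -
  have "\<exists>g. g \<in> Aut F L \<and> \<rho> g = \<theta>" using theta(1) rho_surj by (metis imageE)
  then have "g1 \<in> Aut F L \<and> \<rho> g1 = \<theta>" unfolding g1_def by (rule someI_ex)
  then show "g1 \<in> Aut F L" "\<rho> g1 = \<theta>" by blast+
qed

definition "hh = g1 [^]\<^bsub>Gal F L\<^esub> p"

lemma hh_facts: "hh \<in> Aut F L" "\<rho> hh = \<theta> [^]\<^bsub>Gal F F'\<^esub> p"
  "hh [^]\<^bsub>Gal F L\<^esub> d = id" "group.ord (Gal F L) hh = d"
proof -
  interpret G: group "Gal F L" by (rule grpG)
  interpret rh: group_hom "Gal F L" "Gal F F'" \<rho> by (rule rho_hom)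
  have g: "g1 \<in> carrier (Gal F L)" using g1 by simp
  show hc: "hh \<in> Aut F L" unfolding hh_def using G.nat_pow_closed[OF g] by simp
  show rh: "\<rho> hh = \<theta> [^]\<^bsub>Gal F F'\<^esub> p" unfolding hh_def using rh.hom_nat_pow[OF g] g1 by simp
  have gd: "g1 [^]\<^bsub>Gal F L\<^esub> d \<in> Aut F L" using G.nat_pow_closed[OF g] by simp
  have "\<rho> (g1 [^]\<^bsub>Gal F L\<^esub> d) = \<theta> [^]\<^bsub>Gal F F'\<^esub> d" using rh.hom_nat_pow[OF g] g1 by simp
  also have "\<dots> = id" using theta_pow_one by simp
  finally have "g1 [^]\<^bsub>Gal F L\<^esub> d \<in> Aut F' L" using ker_char[OF gd] by simp
  hence "(g1 [^]\<^bsub>Gal F L\<^esub> d) [^]\<^bsub>Gal F L\<^esub> p = id"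
    using G.pow_card_subgroup[OF P_subgroup finP] cardP by simp
  moreover have "hh [^]\<^bsub>Gal F L\<^esub> d = (g1 [^]\<^bsub>Gal F L\<^esub> d) [^]\<^bsub>Gal F L\<^esub> p"
    unfolding hh_def using G.nat_pow_pow[OF g] by (simp add: mult.commute)
  ultimately show hd: "hh [^]\<^bsub>Gal F L\<^esub> d = id" by simp
  have hcar: "hh \<in> carrier (Gal F L)" using hc by simp
  have o1: "G.ord hh dvd d" using G.pow_eq_id[OF hcar] hd by simp
  have "\<rho> (hh [^]\<^bsub>Gal F L\<^esub> G.ord hh) = id" using G.pow_ord_eq_1[OF hcar] by (simp add: rK_def fun_eq_iff)
  moreover have "\<rho> (hh [^]\<^bsub>Gal F L\<^esub> G.ord hh) = \<theta> [^]\<^bsub>Gal F F'\<^esub> (p * G.ord hh)"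
    using rh.hom_nat_pow[OF hcar] rh monoid.nat_pow_pow[OF group.is_monoid[OF grpQ]] theta(1) by simp
  ultimately have "d dvd p * G.ord hh" using theta_pow_one by simp
  hence "d dvd G.ord hh" using d_facts(3) by (simp add: coprime_dvd_mult_right_iff)
  then show "G.ord hh = d" using o1 by (simp add: dvd_antisym)
qed

definition "H0 = generate (Gal F L) {hh}"

lemma H0_facts: "subgroup H0 (Gal F L)" "card H0 = d" "finite H0" "H0 \<subseteq> Aut F L" "id \<in> H0"
  "\<forall>g\<in>H0. \<forall>h\<in>H0. g \<circ> h \<in> H0"
proof -
  interpret G: group "Gal F L" by (rule grpG)
  have hcar: "hh \<in> carrier (Gal F L)" using hh_facts by simp
  show sg: "subgroup H0 (Gal F L)" unfolding H0_def by (rule G.generate_is_subgroup) (use hcar in simp)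
  show "card H0 = d" unfolding H0_def using G.generate_pow_card[OF hcar] hh_facts(4) by simp
  show sub: "H0 \<subseteq> Aut F L" using subgroup.subset[OF sg] by simp
  show "finite H0" using finite_subset[OF sub finG] .
  show "id \<in> H0" using subgroup.one_closed[OF sg] by simp
  show "\<forall>g\<in>H0. \<forall>h\<in>H0. g \<circ> h \<in> H0" using subgroup.m_closed[OF sg] by simp
qed

definition "E0 = fixf L H0"

lemma E0_facts: "is_subfield E0" "F \<subseteq> E0" "E0 \<subseteq> L" "ext_degree F E0 p"
proof -
  have e: "\<forall>h\<in>H0. emb {} L h" using H0_facts(4) Aut_emb[OF _ basic(3)] emb_mono by blast
  show E: "is_subfield E0" unfolding E0_def by (rule fixf_subfield[OF basic(3) e])
  show FE: "F \<subseteq> E0" unfolding E0_def fixf_def using basic(4,5) H0_facts(4) Aut_D(4) by blast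
  show EL: "E0 \<subseteq> L" unfolding E0_def fixf_def by blast
  obtain a where a: "ext_degree F E0 a" using ext_degree_sub(1)[OF degL E FE EL] by blast
  obtain b where b: "ext_degree E0 L b" using ext_degree_sub(2)[OF degL E FE EL] by blast
  have "b \<le> card H0"
    by (rule artin_bound[OF basic(3) H0_facts(4) H0_facts(3) H0_facts(5) H0_facts(6)]) (use b E0_def in simp)
  moreover have "H0 \<subseteq> Aut E0 L" unfolding E0_def fixf_def Aut_def using H0_facts(4) Aut_def by auto
  hence "card H0 \<le> card (Aut E0 L)" using Aut_finite[OF b] card_mono by blast
  hence "card H0 \<le> b" using Aut_finite(2)[OF b] by simp
  ultimately have bd: "b = d" using H0_facts(2) by simp
  have "a * b = d * p" using ext_degree_unique[OF ext_degree_tower[OF a b] degL] .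
  hence "a = p" using bd d_facts(1) by simp
  then show "ext_degree F E0 p" using a by simp
qed

lemma E0_comp: "compositum E0 F' = L"
  using deg_p_compositum[OF E0_facts(1-3) E0_facts(4)] .

end



context L14
begin

lemma solvG: "solvable (Gal F L)"
proof (rule solvable_condition)
  show "group_hom (Gal F' L) (Gal F L) id"
    unfolding group_hom_def group_hom_axioms_def hom_def
    using group_Gal P_sub by auto
  show "group_hom (Gal F L) (Gal F F') \<rho>" by (rule rho_hom)
  show "\<rho> ` carrier (Gal F L) = carrier (Gal F F')" using rho_surj by simp
  show "kernel (Gal F L) (Gal F F') \<rho> \<subseteq> id ` carrier (Gal F' L)"
    unfolding kernel_def using ker_char by auto
  show "solvable (Gal F' L)" by (rule comm_solvable[OF cyclic_comm[OF cycP]])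
  show "solvable (Gal F F')" by (rule comm_solvable[OF cyclic_comm[OF cycQ]])
qed

lemma closure_facts:
  assumes E: "is_subfield E" "F \<subseteq> E" "E \<subseteq> L"
  shows "galois_ext F (galois_closure F E)" "solvable (Gal F (galois_closure F E))"
proof -
  define Fam where "Fam = {M. is_subfield M \<and> E \<subseteq> M \<and> galois_ext F M}"
  define M0 where "M0 = \<Inter>Fam"
  have M0eq: "galois_closure F E = M0" unfolding M0_def Fam_def galois_closure_def by simp
  have LF: "L \<in> Fam" unfolding Fam_def using basic(3) E(3) gal by blast
  have M0: "is_subfield M0" unfolding M0_def
    by (rule is_subfield_Inter) (use LF in \<open>auto simp: Fam_def\<close>)
  have EM: "E \<subseteq> M0" unfolding M0_def Fam_def by blast
  have MsL: "M0 \<subseteq> L" unfolding M0_def using LF by blast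
  have FM: "F \<subseteq> M0" using E(2) EM by blast
  have stabM: "\<forall>\<sigma>\<in>Aut F L. \<forall>x\<in>M0. \<sigma> x \<in> M0"
  proof (intro ballI)
    fix \<sigma> x assume \<sigma>: "\<sigma> \<in> Aut F L" and x: "x \<in> M0"
    have "\<sigma> x \<in> M" if M: "M \<in> Fam" for M
    proof -
      have gM: "galois_ext F M" "is_subfield M" using M unfolding Fam_def by blast+
      obtain n where "ext_degree F M n" using galois_ext_D[OF gM(1)] by blast
      hence FMM: "F \<subseteq> M" unfolding ext_degree_def by blast
      define K' where "K' = M \<inter> L"
      have K': "is_subfield K'" unfolding K'_def
        using is_subfield_Inter[of "{M, L}"] gM(2) basic(3) by simp
      have FK: "F \<subseteq> K'" unfolding K'_def using FMM basic(4,5) by blast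
      have KM: "K' \<subseteq> M" unfolding K'_def by blast
      have "emb F K' \<sigma>" using emb_dom_mono[OF Aut_emb[OF \<sigma> basic(3)]] K'_def by blast
      then obtain \<tau> where \<tau>: "\<tau> \<in> Aut F M" "\<forall>y\<in>K'. \<sigma> y = \<tau> y"
        using emb_extends[OF gM(1) K' FK KM] by blast
      have "x \<in> K'" unfolding K'_def using x M MsL unfolding M0_def by blast
      then show "\<sigma> x \<in> M" using \<tau> Aut_in[OF \<tau>(1)] KM by auto
    qed
    then show "\<sigma> x \<in> M0" unfolding M0_def by blast
  qed
  show "galois_ext F (galois_closure F E)"
    unfolding M0eq by (rule stable_galois(1)[OF gal M0 FM MsL stabM])
  show "solvable (Gal F (galois_closure F E))"
    unfolding M0eq by (rule solvable_quotient_gal[OF gal M0 FM MsL stabM solvG])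
qed

lemma sep_ext: "separable_ext F E"
  using sep unfolding sep_alg_closure_of_def separable_ext_def by blast

lemma part1: "\<exists>E. ext_degree F E p \<and> solvable_ext F E \<and> L = compositum E F'"
proof (intro exI conjI)
  show "ext_degree F E0 p" by (rule E0_facts(4))
  show "solvable_ext F E0" unfolding solvable_ext_def
    using sep_ext closure_facts[OF E0_facts(1-3)] by blast
  show "L = compositum E0 F'" using E0_comp by simp
qed

end



lemma (in group) conj_back:
  assumes "x \<in> carrier G" "h1 \<in> carrier G" "x \<otimes> h1 \<otimes> inv x = h2"
  shows "inv x \<otimes> h2 \<otimes> inv (inv x) = h1"
proof -
  have "inv x \<otimes> h2 \<otimes> inv (inv x) = inv x \<otimes> (x \<otimes> h1 \<otimes> inv x) \<otimes> x"
    using assms by simp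
  also have "\<dots> = h1" using assms(1,2) by (simp add: m_assoc inv_cancel_left)
  finally show ?thesis .
qed

context L14
begin

lemma part3:
  assumes deg: "ext_degree F E p" and comp: "L = compositum E F'" and conj: "conjugate_over F E E'"
  shows "E' \<subseteq> L"
proof -
  have E: "is_subfield E" "F \<subseteq> E" using deg unfolding ext_degree_def by blast+
  have EL: "E \<subseteq> L" using compositum_props(2)[of E F'] comp by simp
  obtain \<sigma> where \<sigma>: "emb F E \<sigma>" "\<sigma> ` E = E'"
    using conj unfolding conjugate_over_def emb_def by blast
  obtain \<tau> where \<tau>: "\<tau> \<in> Aut F L" "\<forall>x\<in>E. \<sigma> x = \<tau> x"
    using emb_extends[OF gal E EL \<sigma>(1)] by blast
  show ?thesis
  proof
    fix y assume "y \<in> E'"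
    then obtain x where x: "x \<in> E" "y = \<sigma> x" using \<sigma>(2) by blast
    then show "y \<in> L" using \<tau> Aut_in[OF \<tau>(1)] EL by auto
  qed
qed

lemma HE_facts:
  assumes deg: "ext_degree F E p" and comp: "L = compositum E F'"
  shows "is_subfield E" "F \<subseteq> E" "E \<subseteq> L" "card (Aut E L) = d" "fixf L (Aut E L) = E"
    "subgroup (Aut E L) (Gal F L)" "\<And>\<sigma>. \<sigma> \<in> Aut E L \<Longrightarrow> \<sigma> \<in> Aut F' L \<Longrightarrow> \<sigma> = id"
proof -
  show E: "is_subfield E" "F \<subseteq> E" using deg unfolding ext_degree_def by blast+
  show EL: "E \<subseteq> L" using compositum_props(2)[of E F'] comp by simp
  obtain m k where m: "ext_degree F E m" and k: "ext_degree E L k" and ck: "card (Aut E L) = k"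
    using galois_sub[OF gal E EL] by metis
  have "m = p" using ext_degree_unique[OF m deg] .
  moreover have "m * k = d * p" using ext_degree_unique[OF ext_degree_tower[OF m k] degL] .
  ultimately have "k = d" using pr by (simp add: prime_gt_0_nat)
  then show "card (Aut E L) = d" using ck by simp
  show "fixf L (Aut E L) = E" by (rule fixf_Aut[OF gal E EL])
  show "subgroup (Aut E L) (Gal F L)" by (rule subgroup_Aut[OF E(2)])
  fix \<sigma> assume s1: "\<sigma> \<in> Aut E L" and s2: "\<sigma> \<in> Aut F' L"
  define S where "S = {x \<in> L. \<sigma> x = x}"
  have S: "is_subfield S" unfolding S_def by (rule fix_set_subfield[OF s1 basic(3)])
  have "E \<union> F' \<subseteq> S" unfolding S_def using EL basic(5) Aut_D(4)[OF s1] Aut_D(4)[OF s2] by blast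
  hence "compositum E F' \<subseteq> S" using compositum_props(4)[OF S] by blast
  hence "\<forall>x\<in>L. \<sigma> x = id x" using comp unfolding S_def by auto
  then show "\<sigma> = id" using Aut_eqI[OF s1 id_Aut] by blast
qed

lemma HE_gen:
  assumes deg: "ext_degree F E p" and comp: "L = compositum E F'"
  obtains h where "h \<in> Aut E L" "\<rho> h = \<theta>" "generate (Gal F L) {h} = Aut E L"
    "group.ord (Gal F L) h = d"
proof -
  interpret G: group "Gal F L" by (rule grpG)
  interpret rh: group_hom "Gal F L" "Gal F F'" \<rho> by (rule rho_hom)
  note HE = HE_facts[OF deg comp]
  have HG: "Aut E L \<subseteq> Aut F L" using subgroup.subset[OF HE(6)] by simp
  have finH: "finite (Aut E L)" using finite_subset[OF HG finG] .
  have inj: "inj_on \<rho> (Aut E L)"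
  proof (rule inj_onI)
    fix a b assume a: "a \<in> Aut E L" and b: "b \<in> Aut E L" and e: "\<rho> a = \<rho> b"
    have ac: "a \<in> carrier (Gal F L)" and bc: "b \<in> carrier (Gal F L)" using a b HG by auto
    define c where "c = inv\<^bsub>Gal F L\<^esub> a \<otimes>\<^bsub>Gal F L\<^esub> b"
    have cH: "c \<in> Aut E L" unfolding c_def
      using subgroup.m_closed[OF HE(6) subgroup.m_inv_closed[OF HE(6) a] b] by simp
    have cc: "c \<in> carrier (Gal F L)" using cH HG by auto
    have "\<rho> c = inv\<^bsub>Gal F F'\<^esub> (\<rho> a) \<otimes>\<^bsub>Gal F F'\<^esub> \<rho> b"
      unfolding c_def using rh.hom_mult[OF G.inv_closed[OF ac] bc] rh.hom_inv[OF ac] by simp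
    also have "\<dots> = \<one>\<^bsub>Gal F F'\<^esub>" using e rh.H.l_inv rh.hom_closed[OF bc] by simp
    finally have "\<rho> c = id" by simp
    hence "c \<in> Aut F' L" using ker_char cc by simp
    hence "c = id" using HE(7) cH by blast
    hence "c = \<one>\<^bsub>Gal F L\<^esub>" by simp
    then show "a = b" unfolding c_def using ac bc
      by (metis G.inv_closed G.l_inv G.inv_inv G.r_one G.m_assoc G.r_inv)
  qed
  have "\<rho> ` Aut E L \<subseteq> Aut F F'" using rho_surj HG by blast
  moreover have "card (\<rho> ` Aut E L) = card (Aut F F')" using card_image[OF inj] HE(4) cardQ by simp
  ultimately have "\<rho> ` Aut E L = Aut F F'" using card_subset_eq[OF finQ] by blast
  then obtain h where h: "h \<in> Aut E L" "\<rho> h = \<theta>" using theta(1) by (metis imageE)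
  have hc: "h \<in> carrier (Gal F L)" using h HG by auto
  have gsub: "generate (Gal F L) {h} \<subseteq> Aut E L"
    using G.generate_subgroup_incl[OF _ HE(6)] h by blast
  have co: "G.ord h = card (generate (Gal F L) {h})" by (rule G.generate_pow_card[OF hc])
  have "card (generate (Gal F L) {h}) \<le> d" using card_mono[OF finH gsub] HE(4) by simp
  moreover have "\<rho> (h [^]\<^bsub>Gal F L\<^esub> G.ord h) = id" using G.pow_ord_eq_1[OF hc] by (simp add: rK_def fun_eq_iff)
  hence "\<theta> [^]\<^bsub>Gal F F'\<^esub> G.ord h = id" using rh.hom_nat_pow[OF hc] h by simp
  hence "d dvd G.ord h" using theta_pow_one by simp
  moreover have "G.ord h \<noteq> 0"
  proof -
    have "\<one>\<^bsub>Gal F L\<^esub> \<in> generate (Gal F L) {h}" by (rule generate.one)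
    moreover have "finite (generate (Gal F L) {h})" using finite_subset[OF gsub finH] .
    ultimately show ?thesis using co by auto
  qed
  ultimately have od: "G.ord h = d" using co by (metis dvd_imp_le le_antisym neq0_conv)
  have "generate (Gal F L) {h} = Aut E L"
    using card_subset_eq[OF finH gsub] co od HE(4) by simp
  then show ?thesis using that h od by blast
qed

lemma fix_conj:
  assumes x: "x \<in> Aut F L" and h1: "h1 \<in> Aut F L"
    and h2: "h2 = x \<otimes>\<^bsub>Gal F L\<^esub> h1 \<otimes>\<^bsub>Gal F L\<^esub> inv\<^bsub>Gal F L\<^esub> x"
  shows "x ` fixf L (generate (Gal F L) {h1}) \<subseteq> fixf L (generate (Gal F L) {h2})"
proof
  interpret G: group "Gal F L" by (rule grpG)
  have xc: "x \<in> carrier (Gal F L)" and h1c: "h1 \<in> carrier (Gal F L)" using x h1 by simp_all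
  have h2c: "h2 \<in> carrier (Gal F L)" unfolding h2 using xc h1c by (intro G.m_closed G.inv_closed)
  have fc: "finite (carrier (Gal F L))" using finG by simp
  have o1: "G.ord h1 \<noteq> 0" using G.ord_ge_1[OF fc h1c] by simp
  have o2: "G.ord h2 \<noteq> 0" using G.ord_ge_1[OF fc h2c] by simp
  fix w assume "w \<in> x ` fixf L (generate (Gal F L) {h1})"
  then obtain e where e: "e \<in> fixf L (generate (Gal F L) {h1})" "w = x e" by blast
  have eL: "e \<in> L" using e(1) unfolding fixf_def by blast
  have wL: "w \<in> L" using e(2) Aut_in[OF x eL] by simp
  have "\<eta> w = w" if \<eta>: "\<eta> \<in> generate (Gal F L) {h2}" for \<eta>
  proof -
    obtain k :: nat where k: "\<eta> = h2 [^]\<^bsub>Gal F L\<^esub> k"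
      using \<eta> G.generate_pow_nat[OF h2c o2] by blast
    have eta: "\<eta> = x \<otimes>\<^bsub>Gal F L\<^esub> h1 [^]\<^bsub>Gal F L\<^esub> k \<otimes>\<^bsub>Gal F L\<^esub> inv\<^bsub>Gal F L\<^esub> x"
      unfolding k h2 by (rule G.conj_pow[OF xc h1c])
    have "h1 [^]\<^bsub>Gal F L\<^esub> k \<in> generate (Gal F L) {h1}"
      using G.generate_pow_nat[OF h1c o1] by blast
    hence fixe: "(h1 [^]\<^bsub>Gal F L\<^esub> k) e = e" using e(1) unfolding fixf_def by blast
    have "\<eta> w = x ((h1 [^]\<^bsub>Gal F L\<^esub> k) (inv_into UNIV x (x e)))"
      unfolding eta e(2) using Gal_inv[OF x] by simp
    also have "\<dots> = x e" using inv_into_f_f[OF Aut_inj[OF x]] fixe by simp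
    finally show ?thesis using e(2) by simp
  qed
  then show "w \<in> fixf L (generate (Gal F L) {h2})" unfolding fixf_def using wL by blast
qed

lemma part2:
  assumes d1: "ext_degree F E1 p" "L = compositum E1 F'" and d2: "ext_degree F E2 p" "L = compositum E2 F'"
  shows "conjugate_over F E1 E2"
proof -
  interpret G: group "Gal F L" by (rule grpG)
  interpret rh: group_hom "Gal F L" "Gal F F'" \<rho> by (rule rho_hom)
  note H1 = HE_facts[OF d1] and H2 = HE_facts[OF d2]
  obtain h1 where h1: "h1 \<in> Aut E1 L" "\<rho> h1 = \<theta>" "generate (Gal F L) {h1} = Aut E1 L"
    using HE_gen[OF d1] by metis
  obtain h2 where h2: "h2 \<in> Aut E2 L" "\<rho> h2 = \<theta>" "generate (Gal F L) {h2} = Aut E2 L"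
    using HE_gen[OF d2] by metis
  have h1c: "h1 \<in> carrier (Gal F L)" using h1(1) subgroup.subset[OF H1(6)] by blast
  have h2c: "h2 \<in> carrier (Gal F L)" using h2(1) subgroup.subset[OF H2(6)] by blast
  have thc: "\<theta> \<in> carrier (Gal F F')" using theta(1) by simp
  define y where "y = inv\<^bsub>Gal F L\<^esub> h1 \<otimes>\<^bsub>Gal F L\<^esub> h2"
  have yc: "y \<in> carrier (Gal F L)" unfolding y_def using h1c h2c by (intro G.m_closed G.inv_closed)
  have "\<rho> y = inv\<^bsub>Gal F F'\<^esub> \<theta> \<otimes>\<^bsub>Gal F F'\<^esub> \<theta>"
    unfolding y_def using rh.hom_mult[OF G.inv_closed[OF h1c] h2c] rh.hom_inv[OF h1c] h1(2) h2(2) by simp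
  also have "\<dots> = id" using rh.H.l_inv[OF thc] by simp
  finally have yP: "y \<in> Aut F' L" using ker_char yc by simp
  have norm: "\<forall>z\<in>Aut F' L. inv\<^bsub>Gal F L\<^esub> h1 \<otimes>\<^bsub>Gal F L\<^esub> z \<otimes>\<^bsub>Gal F L\<^esub> h1 \<in> Aut F' L"
  proof
    fix z assume z: "z \<in> Aut F' L"
    have zc: "z \<in> carrier (Gal F L)" using z P_sub by auto
    have zr: "\<rho> z = id" using ker_char zc z by simp
    have c: "inv\<^bsub>Gal F L\<^esub> h1 \<otimes>\<^bsub>Gal F L\<^esub> z \<otimes>\<^bsub>Gal F L\<^esub> h1 \<in> carrier (Gal F L)"
      using h1c zc by (intro G.m_closed G.inv_closed)
    have az: "inv\<^bsub>Gal F L\<^esub> h1 \<otimes>\<^bsub>Gal F L\<^esub> z \<in> carrier (Gal F L)"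
      using h1c zc by (intro G.m_closed G.inv_closed)
    have r1: "\<rho> (inv\<^bsub>Gal F L\<^esub> h1 \<otimes>\<^bsub>Gal F L\<^esub> z \<otimes>\<^bsub>Gal F L\<^esub> h1)
        = \<rho> (inv\<^bsub>Gal F L\<^esub> h1 \<otimes>\<^bsub>Gal F L\<^esub> z) \<otimes>\<^bsub>Gal F F'\<^esub> \<rho> h1"
      by (rule rh.hom_mult[OF az h1c])
    have r2: "\<rho> (inv\<^bsub>Gal F L\<^esub> h1 \<otimes>\<^bsub>Gal F L\<^esub> z) = \<rho> (inv\<^bsub>Gal F L\<^esub> h1) \<otimes>\<^bsub>Gal F F'\<^esub> \<rho> z"
      by (rule rh.hom_mult[OF G.inv_closed[OF h1c] zc])
    have r3: "\<rho> (inv\<^bsub>Gal F L\<^esub> h1) = inv\<^bsub>Gal F F'\<^esub> \<theta>" using rh.hom_inv[OF h1c] h1(2) by simp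
    have "\<rho> (inv\<^bsub>Gal F L\<^esub> h1 \<otimes>\<^bsub>Gal F L\<^esub> z \<otimes>\<^bsub>Gal F L\<^esub> h1)
        = inv\<^bsub>Gal F F'\<^esub> \<theta> \<otimes>\<^bsub>Gal F F'\<^esub> id \<otimes>\<^bsub>Gal F F'\<^esub> \<theta>"
      by (simp only: r1 r2 r3 zr h1(2))
    also have "\<dots> = id" using rh.H.l_inv[OF thc] thc by simp
    finally show "inv\<^bsub>Gal F L\<^esub> h1 \<otimes>\<^bsub>Gal F L\<^esub> z \<otimes>\<^bsub>Gal F L\<^esub> h1 \<in> Aut F' L"
      using ker_char c by simp
  qed
  have h1d: "h1 [^]\<^bsub>Gal F L\<^esub> d = \<one>\<^bsub>Gal F L\<^esub>"
    using G.pow_card_subgroup[OF H1(6) _ h1(1)] H1(4) finite_subset[OF subgroup.subset[OF H1(6)]] finG by simp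
  have h2d: "h2 [^]\<^bsub>Gal F L\<^esub> d = \<one>\<^bsub>Gal F L\<^esub>"
    using G.pow_card_subgroup[OF H2(6) _ h2(1)] H2(4) finite_subset[OF subgroup.subset[OF H2(6)]] finG by simp
  have hy: "h1 \<otimes>\<^bsub>Gal F L\<^esub> y = h2"
  proof -
    have "h1 \<otimes>\<^bsub>Gal F L\<^esub> y = (h1 \<otimes>\<^bsub>Gal F L\<^esub> inv\<^bsub>Gal F L\<^esub> h1) \<otimes>\<^bsub>Gal F L\<^esub> h2"
      unfolding y_def by (rule G.m_assoc[symmetric, OF h1c G.inv_closed[OF h1c] h2c])
    also have "\<dots> = h2" by (simp only: G.r_inv[OF h1c] G.l_one[OF h2c])
    finally show ?thesis .
  qed
  obtain x where x: "x \<in> Aut F' L" "x \<otimes>\<^bsub>Gal F L\<^esub> h1 \<otimes>\<^bsub>Gal F L\<^esub> inv\<^bsub>Gal F L\<^esub> x = h1 \<otimes>\<^bsub>Gal F L\<^esub> y"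
    using G.conj_complement[OF P_subgroup finP cardP pr h1c yP norm h1d _ d_facts(3)] hy h2d by blast
  have xG: "x \<in> Aut F L" using x(1) P_sub by blast
  have xc: "x \<in> carrier (Gal F L)" using xG by simp
  have e1: "x \<otimes>\<^bsub>Gal F L\<^esub> h1 \<otimes>\<^bsub>Gal F L\<^esub> inv\<^bsub>Gal F L\<^esub> x = h2" using x(2) hy by simp
  have s1: "x ` E1 \<subseteq> E2"
    using fix_conj[OF xG _ e1[symmetric]] h1c h1(3) h2(3) H1(5) H2(5) by simp
  have ixG: "inv\<^bsub>Gal F L\<^esub> x \<in> Aut F L" using G.inv_closed[OF xc] by simp
  have e2: "inv\<^bsub>Gal F L\<^esub> x \<otimes>\<^bsub>Gal F L\<^esub> h2 \<otimes>\<^bsub>Gal F L\<^esub> inv\<^bsub>Gal F L\<^esub> (inv\<^bsub>Gal F L\<^esub> x) = h1"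
    by (rule G.conj_back[OF xc h1c e1])
  have s2: "(inv\<^bsub>Gal F L\<^esub> x) ` E2 \<subseteq> E1"
    using fix_conj[OF ixG _ e2[symmetric]] h2c h1(3) h2(3) H1(5) H2(5) by simp
  have "E2 \<subseteq> x ` E1"
  proof
    fix w assume w: "w \<in> E2"
    have "inv_into UNIV x w \<in> E1" using s2 w Gal_inv[OF xG] by auto
    moreover have "x (inv_into UNIV x w) = w" using Aut_bij[OF xG] by (simp add: bij_is_surj f_inv_into_f)
    ultimately show "w \<in> x ` E1" by (metis imageI)
  qed
  hence img: "x ` E1 = E2" using s1 by blast
  show ?thesis unfolding conjugate_over_def
  proof (intro exI conjI)
    show "\<forall>a\<in>E1. \<forall>b\<in>E1. x (a + b) = x a + x b \<and> x (a * b) = x a * x b"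
      using Aut_D(2,3)[OF xG] H1(3) by blast
    show "x 1 = 1" by (rule Aut_one[OF xG basic(3)])
    show "\<forall>a\<in>F. x a = a" using Aut_D(4)[OF xG] by blast
    show "x ` E1 = E2" by (rule img)
  qed
qed

end


theorem lemma14:
  fixes F F' L :: "'a::field set" and p :: nat
  assumes "prime p"
    and "sep_alg_closure_of F"
    and "cyclic_ext F F'" and "\<exists>d. ext_degree F F' d \<and> d dvd p - 1"
    and "cyclic_ext F' L" and "ext_degree F' L p"
    and "galois_ext F L"
  shows "(\<exists>E. ext_degree F E p \<and> solvable_ext F E \<and> L = compositum E F') \<and>
         (\<forall>E1 E2. ext_degree F E1 p \<and> L = compositum E1 F' \<and>
                  ext_degree F E2 p \<and> L = compositum E2 F' \<longrightarrow> conjugate_over F E1 E2) \<and>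
         (\<forall>E E'. ext_degree F E p \<and> L = compositum E F' \<and> conjugate_over F E E' \<longrightarrow> E' \<subseteq> L)"
proof -
  obtain d where d: "ext_degree F F' d" "d dvd p - 1" using assms(4) by blast
  interpret L14 F F' L p d
    by (unfold_locales) (use assms d in auto)
  show ?thesis using part1 part2 part3 by blast
qed

end
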